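(* Assume $d\ge1$. An LR triple $A,B,C$ over $\mathbb F$ of diameter $d$ is uniquely determined up to isomorphism by its parameter array together with any one of the following twelve scalars: $$a_0,a'_0,a''_0;\quad a_d,a'_d,a''_d;\quad \alpha_1,\alpha'_1,\alpha''_1;\quad \beta_1,\beta'_1,\beta''_1.$$ That is, two such LR triples with the same parameter array and the same value of one chosen scalar from this list are isomorphic.
   Context: Let $V$ be a vector space over a field $\mathbb F$ with $\dim V=d+1$. A decomposition of $V$ is a sequence $(V_i)_{i=0}^d$ of one-dimensional subspaces with $V=\bigoplus V_i$; $X$ lowers it if $XV_i=V_{i-1}$ ($1\le i\le d$), $XV_0=0$; raises it if $XV_i=V_{i+1}$ ($0\le i\le d-1$), $XV_d=0$. An ordered pair $X,Y\in\mathrm{End}(V)$ is an LR pair if some decomposition (unique, the $(X,Y)$-decomposition) is lowered by $X$ and raised by $Y$; the nonzero eigenvalue of $YX$ on the $i$-th component ($1\le i\le d$) gives the parameter sequence. An LR triple is $A,B,C$ with $A,B$; $B,C$; $C,A$ LR pairs; its parameter array is the triple of parameter sequences of $A,B$; $B,C$; $C,A$. With $E_i,E'_i,E''_i$ the projections onto the $i$-th components of the $(A,B)$-, $(B,C)$-, $(C,A)$-decompositions, $a_i=\mathrm{tr}(CE_i)$, $a'_i=\mathrm{tr}(AE'_i)$, $a''_i=\mathrm{tr}(BE''_i)$. An $(X,Y)$-basis is a basis $(v_i)$ with $v_i$ in the $i$-th component of the $(X,Y)$-decomposition and $Xv_i=v_{i-1}$ ($1\le i\le d$). An upper triangular Toeplitz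 matrix with parameters $(\gamma_i)_{i=0}^d$ has $(i,k)$-entry $\gamma_{k-i}$ for $i\le k$ and $0$ otherwise. Two bases are compatible if the transition matrix between them is upper triangular Toeplitz with diagonal entries $1$. The transition matrix from a $(C,B)$-basis to a compatible $(C,A)$-basis (resp. from an $(A,C)$-basis to a compatible $(A,B)$-basis; from a $(B,A)$-basis to a compatible $(B,C)$-basis) exists and is independent of choices; its parameters are $(\alpha_i)$ (resp. $(\alpha'_i)$; $(\alpha''_i)$), and the parameters of its inverse are $(\beta_i)$ (resp. $(\beta'_i)$; $(\beta''_i)$). Isomorphism of LR triples: a linear bijection intertwining $A,B,C$ with $A',B',C'$. *)

theory Defs
  imports "HOL-Analysis.Analysis"
begin

text \<open>The vector space V of dimension d+1 is realised as 'a^'n with CARD('n) = d+1;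
  End(V) is realised as the matrices 'a^'n^'n acting by (*v).
  A sequence (V_i)_{i=0}^d of subspaces is a function nat => set, with the
  convention V_i = {0} for i > d.\<close>

definition is_decomp :: "nat \<Rightarrow> (nat \<Rightarrow> ('a::field^'n) set) \<Rightarrow> bool" where
  "is_decomp d Vs \<longleftrightarrow>
     (\<forall>i\<le>d. vec.subspace (Vs i) \<and> vec.dim (Vs i) = 1) \<and>
     (\<forall>i>d. Vs i = {0}) \<and>
     (\<forall>v::'a^'n. \<exists>!u. (\<forall>i\<le>d. u i \<in> Vs i) \<and> (\<forall>i>d. u i = 0) \<and> v = (\<Sum>i\<le>d. u i))"

definition lowers :: "nat \<Rightarrow> ('a::field^'n^'n) \<Rightarrow> (nat \<Rightarrow> ('a^'n) set) \<Rightarrow> bool" where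
  "lowers d X Vs \<longleftrightarrow> (\<forall>i. 1 \<le> i \<and> i \<le> d \<longrightarrow> (\<lambda>v. X *v v) ` Vs i = Vs (i - 1))
      \<and> (\<lambda>v. X *v v) ` Vs 0 = {0}"

definition raises :: "nat \<Rightarrow> ('a::field^'n^'n) \<Rightarrow> (nat \<Rightarrow> ('a^'n) set) \<Rightarrow> bool" where
  "raises d X Vs \<longleftrightarrow> (\<forall>i<d. (\<lambda>v. X *v v) ` Vs i = Vs (Suc i))
      \<and> (\<lambda>v. X *v v) ` Vs d = {0}"

definition lr_pair :: "nat \<Rightarrow> ('a::field^'n^'n) \<Rightarrow> ('a^'n^'n) \<Rightarrow> bool" where
  "lr_pair d X Y \<longleftrightarrow> (\<exists>Vs. is_decomp d Vs \<and> lowers d X Vs \<and> raises d Y Vs)"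

definition lr_decomp :: "nat \<Rightarrow> ('a::field^'n^'n) \<Rightarrow> ('a^'n^'n) \<Rightarrow> nat \<Rightarrow> ('a^'n) set" where
  "lr_decomp d X Y = (THE Vs. is_decomp d Vs \<and> lowers d X Vs \<and> raises d Y Vs)"

definition lr_param :: "nat \<Rightarrow> ('a::field^'n^'n) \<Rightarrow> ('a^'n^'n) \<Rightarrow> nat \<Rightarrow> 'a" where
  "lr_param d X Y i = (THE \<phi>. \<forall>v \<in> lr_decomp d X Y i. (Y ** X) *v v = \<phi> *s v)"

definition lr_triple :: "nat \<Rightarrow> ('a::field^'n^'n) \<Rightarrow> ('a^'n^'n) \<Rightarrow> ('a^'n^'n) \<Rightarrow> bool" where
  "lr_triple d A B C \<longleftrightarrow> lr_pair d A B \<and> lr_pair d B C \<and> lr_pair d C A"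

definition same_param_array ::
  "nat \<Rightarrow> ('a::field^'n^'n) \<Rightarrow> ('a^'n^'n) \<Rightarrow> ('a^'n^'n) \<Rightarrow> ('a^'n^'n) \<Rightarrow> ('a^'n^'n) \<Rightarrow> ('a^'n^'n) \<Rightarrow> bool" where
  "same_param_array d A B C A' B' C' \<longleftrightarrow>
     (\<forall>i. 1 \<le> i \<and> i \<le> d \<longrightarrow>
        lr_param d A B i = lr_param d A' B' i \<and>
        lr_param d B C i = lr_param d B' C' i \<and>
        lr_param d C A i = lr_param d C' A' i)"

definition decomp_component :: "nat \<Rightarrow> (nat \<Rightarrow> ('a::field^'n) set) \<Rightarrow> nat \<Rightarrow> 'a^'n \<Rightarrow> 'a^'n" where
  "decomp_component d Vs i v =
     (THE u. (\<forall>j\<le>d. u j \<in> Vs j) \<and> (\<forall>j>d. u j = 0) \<and> v = (\<Sum>j\<le>d. u j)) i"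

definition decomp_proj :: "nat \<Rightarrow> (nat \<Rightarrow> ('a::field^'n) set) \<Rightarrow> nat \<Rightarrow> 'a^'n^'n" where
  "decomp_proj d Vs i = matrix (decomp_component d Vs i)"

definition a_seq :: "nat \<Rightarrow> ('a::field^'n^'n) \<Rightarrow> ('a^'n^'n) \<Rightarrow> ('a^'n^'n) \<Rightarrow> nat \<Rightarrow> 'a" where
  "a_seq d A B C i = trace (C ** decomp_proj d (lr_decomp d A B) i)"

definition a'_seq :: "nat \<Rightarrow> ('a::field^'n^'n) \<Rightarrow> ('a^'n^'n) \<Rightarrow> ('a^'n^'n) \<Rightarrow> nat \<Rightarrow> 'a" where
  "a'_seq d A B C i = trace (A ** decomp_proj d (lr_decomp d B C) i)"

definition a''_seq :: "nat \<Rightarrow> ('a::field^'n^'n) \<Rightarrow> ('a^'n^'n) \<Rightarrow> ('a^'n^'n) \<Rightarrow> nat \<Rightarrow> 'a" where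
  "a''_seq d A B C i = trace (B ** decomp_proj d (lr_decomp d C A) i)"

definition lr_basis :: "nat \<Rightarrow> ('a::field^'n^'n) \<Rightarrow> ('a^'n^'n) \<Rightarrow> (nat \<Rightarrow> 'a^'n) \<Rightarrow> bool" where
  "lr_basis d X Y v \<longleftrightarrow>
     inj_on v {..d} \<and> vec.independent (v ` {..d}) \<and> vec.span (v ` {..d}) = UNIV \<and>
     (\<forall>i\<le>d. v i \<in> lr_decomp d X Y i) \<and>
     (\<forall>i. 1 \<le> i \<and> i \<le> d \<longrightarrow> X *v v i = v (i - 1))"

text \<open>The transition matrix from basis u to basis w is upper triangular Toeplitz with
  parameters gamma_0 = 1, gamma_1, ..., gamma_d, i.e. w_k = sum_{i<=k} gamma_{k-i} u_i
  (column k of the transition matrix holds the coordinates of w_k in the basis u).\<close>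
definition toeplitz_transition :: "nat \<Rightarrow> (nat \<Rightarrow> 'a::field^'n) \<Rightarrow> (nat \<Rightarrow> 'a^'n) \<Rightarrow> (nat \<Rightarrow> 'a) \<Rightarrow> bool" where
  "toeplitz_transition d u w \<gamma> \<longleftrightarrow> \<gamma> 0 = 1 \<and> (\<forall>i>d. \<gamma> i = 0) \<and>
     (\<forall>k\<le>d. w k = (\<Sum>i\<le>k. \<gamma> (k - i) *s u i))"

definition trans_params :: "nat \<Rightarrow> ('a::field^'n^'n) \<Rightarrow> ('a^'n^'n) \<Rightarrow> ('a^'n^'n) \<Rightarrow> nat \<Rightarrow> 'a" where
  "trans_params d X Y Z = (THE \<gamma>. \<exists>u w. lr_basis d X Y u \<and> lr_basis d X Z w \<and> toeplitz_transition d u w \<gamma>)"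

text \<open>alpha: (C,B)-basis to (C,A)-basis; beta: parameters of the inverse, i.e. of the
  transition from the (C,A)-basis back to the compatible (C,B)-basis. Similarly for the primed ones.\<close>
definition alpha :: "nat \<Rightarrow> ('a::field^'n^'n) \<Rightarrow> ('a^'n^'n) \<Rightarrow> ('a^'n^'n) \<Rightarrow> nat \<Rightarrow> 'a" where
  "alpha d A B C = trans_params d C B A"
definition beta :: "nat \<Rightarrow> ('a::field^'n^'n) \<Rightarrow> ('a^'n^'n) \<Rightarrow> ('a^'n^'n) \<Rightarrow> nat \<Rightarrow> 'a" where
  "beta d A B C = trans_params d C A B"
definition alpha' :: "nat \<Rightarrow> ('a::field^'n^'n) \<Rightarrow> ('a^'n^'n) \<Rightarrow> ('a^'n^'n) \<Rightarrow> nat \<Rightarrow> 'a" where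
  "alpha' d A B C = trans_params d A C B"
definition beta' :: "nat \<Rightarrow> ('a::field^'n^'n) \<Rightarrow> ('a^'n^'n) \<Rightarrow> ('a^'n^'n) \<Rightarrow> nat \<Rightarrow> 'a" where
  "beta' d A B C = trans_params d A B C"
definition alpha'' :: "nat \<Rightarrow> ('a::field^'n^'n) \<Rightarrow> ('a^'n^'n) \<Rightarrow> ('a^'n^'n) \<Rightarrow> nat \<Rightarrow> 'a" where
  "alpha'' d A B C = trans_params d B A C"
definition beta'' :: "nat \<Rightarrow> ('a::field^'n^'n) \<Rightarrow> ('a^'n^'n) \<Rightarrow> ('a^'n^'n) \<Rightarrow> nat \<Rightarrow> 'a" where
  "beta'' d A B C = trans_params d B C A"

definition lr_triple_iso :: "('a::field^'n^'n) \<Rightarrow> ('a^'n^'n) \<Rightarrow> ('a^'n^'n) \<Rightarrow> ('a^'n^'n) \<Rightarrow> ('a^'n^'n) \<Rightarrow> ('a^'n^'n) \<Rightarrow> bool" where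
  "lr_triple_iso A B C A' B' C' \<longleftrightarrow>
     (\<exists>P. invertible P \<and> P ** A = A' ** P \<and> P ** B = B' ** P \<and> P ** C = C' ** P)"

end

theory Submission
  imports Defs
begin


lemma span1:
  fixes S :: "('a::field^'n) set"
  assumes "vec.subspace S" "vec.dim S = 1" "v \<in> S" "v \<noteq> 0"
  shows "S = vec.span {v}"
proof -
  have "vec.span {v} \<subseteq> S" using assms by (simp add: vec.span_minimal)
  moreover have "vec.dim (vec.span {v}) \<ge> vec.dim S" using assms by simp
  ultimately show ?thesis using vec.subspace_dim_equal[of "vec.span {v}" S] assms by auto
qed

lemma dim1_nonzero:
  fixes S :: "('a::field^'n) set"
  assumes "vec.dim S = 1"
  shows "\<exists>v\<in>S. v \<noteq> 0"
proof (rule ccontr)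
  assume "\<not> ?thesis" then have "S \<subseteq> {0}" by auto
  then have "vec.dim S = 0" by simp
  with assms show False by simp
qed

lemma in_span1: "x \<in> vec.span {v} \<longleftrightarrow> (\<exists>c. x = c *s (v::'a::field^'n))"
  by (auto simp: vec.span_singleton)

definition indep :: "nat \<Rightarrow> (nat \<Rightarrow> 'a::field^'n) \<Rightarrow> bool" where
  "indep d v \<longleftrightarrow> (\<forall>c. (\<Sum>i\<le>d. c i *s v i) = 0 \<longrightarrow> (\<forall>i\<le>d. c i = 0))"
definition spans :: "nat \<Rightarrow> (nat \<Rightarrow> 'a::field^'n) \<Rightarrow> bool" where
  "spans d v \<longleftrightarrow> (\<forall>x. \<exists>c. x = (\<Sum>i\<le>d. c i *s v i))"
definition coord :: "nat \<Rightarrow> (nat \<Rightarrow> 'a::field^'n) \<Rightarrow> 'a^'n \<Rightarrow> nat \<Rightarrow> 'a" where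
  "coord d v x = (SOME c. (\<forall>i>d. c i = 0) \<and> x = (\<Sum>i\<le>d. c i *s v i))"

lemma sum_delta_scale:
  fixes f :: "nat \<Rightarrow> 'a::field^'n"
  assumes "finite S" "j \<in> S"
  shows "(\<Sum>k\<in>S. (if k = j then 1 else 0) *s f k) = f j"
proof -
  have "(\<Sum>k\<in>S. (if k = j then 1 else 0) *s f k) = (\<Sum>k\<in>S. if k = j then f k else 0)"
    by (rule sum.cong) auto
  also have "\<dots> = f j" using assms by (simp add: sum.delta)
  finally show ?thesis .
qed

locale cbasis =
  fixes d :: nat and v :: "nat \<Rightarrow> 'a::field^'n"
  assumes ind: "indep d v" and sp: "spans d v"
begin

lemma coord_spec: "(\<forall>i>d. coord d v x i = 0) \<and> x = (\<Sum>i\<le>d. coord d v x i *s v i)"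
proof -
  obtain c where c: "x = (\<Sum>i\<le>d. c i *s v i)" using sp unfolding spans_def by blast
  let ?c = "\<lambda>i. if i \<le> d then c i else 0"
  have "(\<forall>i>d. ?c i = 0) \<and> x = (\<Sum>i\<le>d. ?c i *s v i)" using c by auto
  then show ?thesis unfolding coord_def by (rule someI[where P="\<lambda>c. (\<forall>i>d. c i = 0) \<and> x = (\<Sum>i\<le>d. c i *s v i)"])
qed

lemma coord_high: "d < i \<Longrightarrow> coord d v x i = 0" using coord_spec by blast
lemma coord_expand: "x = (\<Sum>i\<le>d. coord d v x i *s v i)" using coord_spec by blast

lemma coord_unique:
  assumes "x = (\<Sum>i\<le>d. c i *s v i)" "i \<le> d"
  shows "coord d v x i = c i"
proof -
  have "(\<Sum>i\<le>d. (coord d v x i - c i) *s v i) = (\<Sum>i\<le>d. coord d v x i *s v i) - (\<Sum>i\<le>d. c i *s v i)"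
    by (simp add: vec.scale_left_diff_distrib sum_subtractf)
  also have "\<dots> = 0" by (simp only: coord_expand[symmetric] assms(1)[symmetric]) simp
  finally have "(\<Sum>i\<le>d. (coord d v x i - c i) *s v i) = 0" .
  then show ?thesis using ind assms(2) unfolding indep_def by fastforce
qed

lemma nonzero: "i \<le> d \<Longrightarrow> v i \<noteq> 0"
proof -
  assume i: "i \<le> d"
  show "v i \<noteq> 0"
  proof
    assume vi: "v i = 0"
    have "(\<Sum>j\<le>d. (if j = i then 1 else 0) *s v j) = 0" using vi i by (subst sum_delta_scale) auto
    from ind[unfolded indep_def, rule_format, OF this i] have "(if i = i then 1 else 0) = (0::'a)" .
    then show False by simp
  qed
qed

lemma coord_basis: "i \<le> d \<Longrightarrow> j \<le> d \<Longrightarrow> coord d v (v j) i = (if i = j then 1 else 0)"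
proof -
  assume i: "i \<le> d" and j: "j \<le> d"
  have "v j = (\<Sum>k\<le>d. (if k = j then 1 else 0) *s v k)" using j by (subst sum_delta_scale) auto
  from coord_unique[OF this i] show ?thesis by simp
qed

lemma coord_add: "coord d v (x + y) i = coord d v x i + coord d v y i"
proof (cases "i \<le> d")
  case True
  have "(\<Sum>i\<le>d. (coord d v x i + coord d v y i) *s v i) = (\<Sum>i\<le>d. coord d v x i *s v i) + (\<Sum>i\<le>d. coord d v y i *s v i)"
    by (simp add: vec.scale_left_distrib sum.distrib)
  also have "\<dots> = x + y" by (simp only: coord_expand[symmetric])
  finally have "x + y = (\<Sum>i\<le>d. (coord d v x i + coord d v y i) *s v i)" by simp
  from coord_unique[OF this True] show ?thesis .
qed (simp add: coord_high)

lemma coord_scale: "coord d v (a *s x) i = a * coord d v x i"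
proof (cases "i \<le> d")
  case True
  have "(\<Sum>i\<le>d. (a * coord d v x i) *s v i) = a *s (\<Sum>i\<le>d. coord d v x i *s v i)"
    by (simp add: vec.scale_sum_right)
  also have "\<dots> = a *s x" by (simp only: coord_expand[symmetric])
  finally have "a *s x = (\<Sum>i\<le>d. (a * coord d v x i) *s v i)" by simp
  from coord_unique[OF this True] show ?thesis .
qed (simp add: coord_high)

lemma coord_zero: "coord d v 0 i = 0"
  using coord_scale[of 0 0 i] by simp

lemma coord_diff: "coord d v (x - y) i = coord d v x i - coord d v y i"
  using coord_add[of "x - y" y i] by simp

lemma coord_sum: "finite S \<Longrightarrow> coord d v (\<Sum>j\<in>S. f j) i = (\<Sum>j\<in>S. coord d v (f j) i)"
  by (induction S rule: finite_induct) (auto simp: coord_zero coord_add)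

lemma coord_eqI: "(\<And>i. i \<le> d \<Longrightarrow> coord d v x i = coord d v y i) \<Longrightarrow> x = y"
proof -
  assume h: "\<And>i. i \<le> d \<Longrightarrow> coord d v x i = coord d v y i"
  have "(\<Sum>i\<le>d. coord d v x i *s v i) = (\<Sum>i\<le>d. coord d v y i *s v i)"
    by (rule sum.cong) (auto simp: h)
  then show "x = y" by (simp only: coord_expand[symmetric])
qed

end


abbreviation pw :: "'a::field^'n^'n \<Rightarrow> nat \<Rightarrow> 'a^'n \<Rightarrow> 'a^'n" where
  "pw X n \<equiv> ((*v) X) ^^ n"

lemma mv_sum: "finite S \<Longrightarrow> (X::'a::field^'n^'n) *v (\<Sum>j\<in>S. f j) = (\<Sum>j\<in>S. X *v f j)"
  by (induction S rule: finite_induct) (auto simp: matrix_vector_right_distrib)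

lemma pw_add: "pw X n (x + y) = pw X n x + pw X n y"
  by (induction n) (auto simp: matrix_vector_right_distrib)

lemma pw_scale: "pw X n (c *s x) = c *s pw X n x"
  by (induction n) (auto simp: vector_scalar_commute)

lemma pw_zero: "pw X n 0 = 0"
  by (induction n) auto

lemma pw_sum: "finite S \<Longrightarrow> pw X n (\<Sum>j\<in>S. f j) = (\<Sum>j\<in>S. pw X n (f j))"
  by (induction S rule: finite_induct) (auto simp: pw_add pw_zero)

lemma pw_Suc_left: "pw X (Suc n) x = X *v pw X n x" by simp
lemma pw_Suc_right: "pw X (Suc n) x = pw X n (X *v x)" by (simp add: funpow_Suc_right del: funpow.simps)

lemma sum_last:
  fixes f :: "nat \<Rightarrow> 'b::comm_monoid_add"
  assumes "\<And>j. j < d \<Longrightarrow> f j = 0"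
  shows "(\<Sum>j\<le>d. f j) = f d"
proof -
  have "(\<Sum>j\<le>d. f j) = (\<Sum>j\<in>{d}. f j)"
    by (rule sum.mono_neutral_right) (use assms in auto)
  then show ?thesis by simp
qed

lemma sum_single:
  fixes f :: "nat \<Rightarrow> 'b::comm_monoid_add"
  assumes "k \<le> d" "\<And>j. j \<le> d \<Longrightarrow> j \<noteq> k \<Longrightarrow> f j = 0"
  shows "(\<Sum>j\<le>d. f j) = f k"
proof -
  have "(\<Sum>j\<le>d. f j) = (\<Sum>j\<in>{k}. f j)"
    by (rule sum.mono_neutral_right) (use assms in auto)
  then show ?thesis by simp
qed

locale lchain = cbasis d v for d and v :: "nat \<Rightarrow> 'a::field^'n" +
  fixes X :: "'a^'n^'n"
  assumes low: "\<And>i. 1 \<le> i \<Longrightarrow> i \<le> d \<Longrightarrow> X *v v i = v (i - 1)"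
    and low0: "X *v v 0 = 0"
begin

lemma coord_low: "coord d v (X *v x) j = (if j < d then coord d v x (Suc j) else 0)"
proof (cases "j \<le> d")
  case True
  have "X *v x = (\<Sum>i\<le>d. coord d v x i *s (X *v v i))"
    by (subst coord_expand[of x]) (simp add: mv_sum vector_scalar_commute)
  then have "coord d v (X *v x) j = (\<Sum>i\<le>d. coord d v x i * coord d v (X *v v i) j)"
    by (simp add: coord_sum coord_scale)
  also have "\<dots> = (\<Sum>i\<le>d. if i = Suc j then coord d v x i else 0)"
  proof (rule sum.cong)
    fix i assume i: "i \<in> {..d}"
    show "coord d v x i * coord d v (X *v v i) j = (if i = Suc j then coord d v x i else 0)"
    proof (cases "i = 0")
      case True then show ?thesis by (simp add: low0 coord_zero)
    next
      case False
      then have "X *v v i = v (i - 1)" using i low by auto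
      then show ?thesis using False i True by (auto simp: coord_basis)
    qed
  qed simp
  also have "\<dots> = (if j < d then coord d v x (Suc j) else 0)"
    using True by (simp add: sum.delta)
  finally show ?thesis .
qed (simp add: coord_high)

lemma pw_basis: "i \<le> d \<Longrightarrow> pw X n (v i) = (if n \<le> i then v (i - n) else 0)"
proof (induction n)
  case 0 then show ?case by simp
next
  case (Suc n)
  show ?case
  proof (cases "Suc n \<le> i")
    case True
    then have "pw X (Suc n) (v i) = X *v v (i - n)" using Suc by simp
    also have "\<dots> = v (i - Suc n)" using low[of "i - n"] True Suc.prems by simp
    finally show ?thesis using True by simp
  next
    case False
    show ?thesis
    proof (cases "n \<le> i")
      case True
      with False have "n = i" by simp
      then show ?thesis using Suc False by (simp add: low0)
    next
      case False2: False
      then show ?thesis using Suc False by simp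
    qed
  qed
qed

lemma pw_kill: "j \<le> d \<Longrightarrow> j < n \<Longrightarrow> pw X n (v j) = 0"
  using pw_basis by simp

lemma coord_pw: "coord d v (pw X n x) j = (if j + n \<le> d then coord d v x (j + n) else 0)"
proof (induction n arbitrary: j)
  case 0 then show ?case by (simp add: coord_high)
next
  case (Suc n)
  have "coord d v (pw X (Suc n) x) j = (if j < d then coord d v (pw X n x) (Suc j) else 0)"
    by (simp add: coord_low)
  also have "\<dots> = (if j + Suc n \<le> d then coord d v x (j + Suc n) else 0)"
    using Suc by auto
  finally show ?case .
qed

lemma flag: "pw X m x = 0 \<Longrightarrow> m \<le> j \<Longrightarrow> coord d v x j = 0"
proof -
  assume h: "pw X m x = 0" "m \<le> j"
  show ?thesis
  proof (cases "j \<le> d")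
    case True
    have "coord d v (pw X m x) (j - m) = coord d v x j" using True h(2) by (simp add: coord_pw)
    then show ?thesis using h(1) by (simp add: coord_zero)
  qed (simp add: coord_high)
qed

end

locale rchain = cbasis d v for d and v :: "nat \<Rightarrow> 'a::field^'n" +
  fixes Y :: "'a^'n^'n" and \<phi> :: "nat \<Rightarrow> 'a"
  assumes rai: "\<And>i. i < d \<Longrightarrow> Y *v v i = \<phi> (Suc i) *s v (Suc i)"
    and raid: "Y *v v d = 0"
    and phinz: "\<And>i. 1 \<le> i \<Longrightarrow> i \<le> d \<Longrightarrow> \<phi> i \<noteq> 0"
begin

lemma coord_raise: "j \<le> d \<Longrightarrow> coord d v (Y *v x) j = (if 1 \<le> j then \<phi> j * coord d v x (j - 1) else 0)"
proof -
  assume j: "j \<le> d"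
  have "Y *v x = (\<Sum>i\<le>d. coord d v x i *s (Y *v v i))"
    by (subst coord_expand[of x]) (simp add: mv_sum vector_scalar_commute)
  then have "coord d v (Y *v x) j = (\<Sum>i\<le>d. coord d v x i * coord d v (Y *v v i) j)"
    by (simp add: coord_sum coord_scale)
  also have "\<dots> = (\<Sum>i\<le>d. if Suc i = j then \<phi> j * coord d v x i else 0)"
  proof (rule sum.cong)
    fix i assume i: "i \<in> {..d}"
    show "coord d v x i * coord d v (Y *v v i) j = (if Suc i = j then \<phi> j * coord d v x i else 0)"
    proof (cases "i = d")
      case True then show ?thesis using j by (simp add: raid coord_zero)
    next
      case False
      then have "i < d" using i by simp
      then show ?thesis using j by (auto simp: rai coord_scale coord_basis)
    qed
  qed simp
  also have "\<dots> = (if 1 \<le> j then \<phi> j * coord d v x (j - 1) else 0)"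
  proof (cases j)
    case 0 then show ?thesis by simp
  next
    case (Suc j')
    have "(\<Sum>i\<le>d. if Suc i = j then \<phi> j * coord d v x i else 0) = (\<Sum>i\<le>d. if i = j' then \<phi> j * coord d v x i else 0)"
      using Suc by (intro sum.cong) auto
    also have "\<dots> = \<phi> j * coord d v x j'" using Suc j by (simp add: sum.delta)
    finally show ?thesis using Suc by simp
  qed
  finally show ?thesis .
qed

lemma flag_r: "pw Y m x = 0 \<Longrightarrow> j + m \<le> d \<Longrightarrow> coord d v x j = 0"
proof (induction m arbitrary: x j)
  case 0 then show ?case by (simp add: coord_zero)
next
  case (Suc m)
  have "pw Y m (Y *v x) = 0" using Suc.prems(1) by (simp add: pw_Suc_right del: funpow.simps)
  then have "coord d v (Y *v x) (Suc j) = 0" using Suc.IH Suc.prems(2) by simp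
  then have "\<phi> (Suc j) * coord d v x j = 0" using Suc.prems(2) by (simp add: coord_raise)
  moreover have "\<phi> (Suc j) \<noteq> 0" using Suc.prems(2) phinz by simp
  ultimately show ?case by simp
qed

lemma pw_rkill: "i \<le> d \<Longrightarrow> d < i + n \<Longrightarrow> pw Y n (v i) = 0"
proof (induction n arbitrary: i)
  case 0 then show ?case by simp
next
  case (Suc n)
  show ?case
  proof (cases "i < d")
    case True
    have "pw Y (Suc n) (v i) = pw Y n (\<phi> (Suc i) *s v (Suc i))"
      by (simp add: pw_Suc_right rai True del: funpow.simps)
    also have "\<dots> = 0" using Suc.IH[of "Suc i"] Suc.prems True by (simp add: pw_scale)
    finally show ?thesis .
  next
    case False
    then have "i = d" using Suc.prems by simp
    then show ?thesis by (simp add: pw_Suc_right raid pw_zero del: funpow.simps)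
  qed
qed

lemma coord_pw_low: "j < n \<Longrightarrow> coord d v (pw Y n x) j = 0"
proof (induction n arbitrary: j)
  case 0 then show ?case by simp
next
  case (Suc n)
  show ?case
  proof (cases "j \<le> d")
    case True
    have "coord d v (pw Y (Suc n) x) j = (if 1 \<le> j then \<phi> j * coord d v (pw Y n x) (j - 1) else 0)"
      using True by (simp add: coord_raise)
    then show ?thesis using Suc by auto
  qed (simp add: coord_high)
qed

end



lemma img_span1: "(\<lambda>x. (X::'a::field^'n^'n) *v x) ` vec.span {v} = vec.span {X *v v}"
proof -
  have "(\<lambda>x. X *v x) ` range (\<lambda>k. k *s v) = range (\<lambda>k. k *s (X *v v))"
    by (auto simp: vector_scalar_commute image_iff)
  then show ?thesis by (simp add: vec.span_singleton)
qed

lemma nonzero_map: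
  fixes X :: "'a::field^'n^'n"
  assumes "vec.subspace S" "vec.dim S = 1" "v \<in> S" "v \<noteq> 0" "(\<lambda>x. X *v x) ` S = T" "vec.dim T = 1"
  shows "X *v v \<noteq> 0"
proof
  assume z: "X *v v = 0"
  have "S = vec.span {v}" using span1 assms by blast
  then have "T = vec.span {X *v v}" using assms(5) img_span1[of X v] by simp
  then have "T = {0}" using z by simp
  then show False using assms(6) by simp
qed

lemma decD:
  assumes "is_decomp d Vs"
  shows "i \<le> d \<Longrightarrow> vec.subspace (Vs i)" "i \<le> d \<Longrightarrow> vec.dim (Vs i) = 1" "d < i \<Longrightarrow> Vs i = {0}"
    "\<exists>!u. (\<forall>i\<le>d. u i \<in> Vs i) \<and> (\<forall>i>d. u i = 0) \<and> x = (\<Sum>i\<le>d. u i)"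
  using assms unfolding is_decomp_def by auto

lemma ex1_eq: "\<exists>!x. P x \<Longrightarrow> P a \<Longrightarrow> P b \<Longrightarrow> a = b" by blast

lemma gc0:
  fixes X Y :: "'a::field^'n^'n"
  assumes dec: "is_decomp d Vs" and lo: "lowers d X Vs" and ra: "raises d Y Vs"
    and e: "e \<in> Vs d" "e \<noteq> 0"
  shows "cbasis d (\<lambda>k. pw X (d - k) e)" "lchain d (\<lambda>k. pw X (d - k) e) X"
    "\<forall>k\<le>d. Vs k = vec.span {pw X (d - k) e}"
    "\<forall>k<d. \<exists>c. c \<noteq> 0 \<and> Y *v pw X (d - k) e = c *s pw X (d - Suc k) e"
    "Y *v pw X (d - d) e = 0"
proof -
  define v where "v = (\<lambda>k. pw X (d - k) e)"
  note sub = decD(1)[OF dec] and dim1 = decD(2)[OF dec]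
  have lo1: "\<And>i. 1 \<le> i \<Longrightarrow> i \<le> d \<Longrightarrow> (\<lambda>v. X *v v) ` Vs i = Vs (i - 1)"
    and lo0: "(\<lambda>v. X *v v) ` Vs 0 = {0}" using lo unfolding lowers_def by auto
  have ra1: "\<And>i. i < d \<Longrightarrow> (\<lambda>v. Y *v v) ` Vs i = Vs (Suc i)"
    and rad: "(\<lambda>v. Y *v v) ` Vs d = {0}" using ra unfolding raises_def by auto
  have mn: "n \<le> d \<Longrightarrow> pw X n e \<in> Vs (d - n) \<and> pw X n e \<noteq> 0" for n
  proof (induction n)
    case 0 then show ?case using e by simp
  next
    case (Suc n)
    then have IH: "pw X n e \<in> Vs (d - n)" "pw X n e \<noteq> 0" by auto
    have eq: "(\<lambda>v. X *v v) ` Vs (d - n) = Vs (d - Suc n)" using lo1[of "d - n"] Suc.prems by simp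
    have "pw X (Suc n) e \<in> Vs (d - Suc n)" using IH(1) eq by auto
    moreover have "pw X (Suc n) e \<noteq> 0"
      using nonzero_map[OF sub dim1 IH(1) IH(2) eq] dim1[of "d - Suc n"] Suc.prems by simp
    ultimately show ?case by simp
  qed
  have vmem: "k \<le> d \<Longrightarrow> v k \<in> Vs k" and vnz: "k \<le> d \<Longrightarrow> v k \<noteq> 0" for k
    using mn[of "d - k"] unfolding v_def by auto
  have vsp: "k \<le> d \<Longrightarrow> Vs k = vec.span {v k}" for k
    using span1[OF sub dim1 vmem vnz] by simp
  show "\<forall>k\<le>d. Vs k = vec.span {pw X (d - k) e}" using vsp unfolding v_def by simp
  have chain: "1 \<le> i \<Longrightarrow> i \<le> d \<Longrightarrow> X *v v i = v (i - 1)" for i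
  proof -
    assume "1 \<le> i" "i \<le> d"
    then have "d - (i - 1) = Suc (d - i)" by simp
    then show ?thesis unfolding v_def by simp
  qed
  have chain0: "X *v v 0 = 0" using vmem[of 0] lo0 by auto
  have rai: "k < d \<Longrightarrow> \<exists>c. c \<noteq> 0 \<and> Y *v v k = c *s v (Suc k)" for k
  proof -
    assume k: "k < d"
    have "Y *v v k \<in> Vs (Suc k)" using ra1[OF k] vmem[of k] k by auto
    then obtain c where c: "Y *v v k = c *s v (Suc k)" using vsp[of "Suc k"] k by (auto simp: in_span1)
    have "Y *v v k \<noteq> 0"
      using nonzero_map[OF sub dim1 vmem vnz ra1[OF k]] dim1[of "Suc k"] k by simp
    then have "c \<noteq> 0" using c by auto
    then show ?thesis using c by blast
  qed
  then show "\<forall>k<d. \<exists>c. c \<noteq> 0 \<and> Y *v pw X (d - k) e = c *s pw X (d - Suc k) e" unfolding v_def by simp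
  show "Y *v pw X (d - d) e = 0" using vmem[of d] rad unfolding v_def by auto
  have sp: "spans d v" unfolding spans_def
  proof
    fix x
    obtain u where u: "\<forall>i\<le>d. u i \<in> Vs i" "x = (\<Sum>i\<le>d. u i)" using decD(4)[OF dec, of x] by blast
    have "\<forall>i\<in>{..d}. \<exists>c. u i = c *s v i" using u(1) vsp by (auto simp: in_span1)
    from bchoice[OF this] obtain c where c: "\<forall>i\<in>{..d}. u i = c i *s v i" by blast
    have "x = (\<Sum>i\<le>d. c i *s v i)" using u(2) c by simp
    then show "\<exists>c. x = (\<Sum>i\<le>d. c i *s v i)" by blast
  qed
  have ind: "indep d v" unfolding indep_def
  proof (rule allI, rule impI)
    fix c :: "nat \<Rightarrow> 'a" assume s: "(\<Sum>i\<le>d. c i *s v i) = 0"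
    define u1 where "u1 = (\<lambda>i. if i \<le> d then c i *s v i else 0)"
    have P1: "(\<forall>i\<le>d. u1 i \<in> Vs i) \<and> (\<forall>i>d. u1 i = 0) \<and> 0 = (\<Sum>i\<le>d. u1 i)"
      using s vmem sub unfolding u1_def by (auto intro: vec.subspace_scale)
    have P2: "(\<forall>i\<le>d. (\<lambda>i. 0) i \<in> Vs i) \<and> (\<forall>i>d. (\<lambda>i. 0::'a^'n) i = 0) \<and> 0 = (\<Sum>i\<le>d. (\<lambda>i. 0::'a^'n) i)"
      using sub by (auto intro: vec.subspace_0)
    have U: "u1 = (\<lambda>i. 0)"
      by (rule ex1_eq[where P="\<lambda>u. (\<forall>i\<le>d. u i \<in> Vs i) \<and> (\<forall>i>d. u i = 0) \<and> 0 = (\<Sum>i\<le>d. u i)", OF decD(4)[OF dec, of 0] P1 P2])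
    show "\<forall>i\<le>d. c i = 0"
    proof (intro allI impI)
      fix i assume i: "i \<le> d"
      have "u1 i = 0" using U by simp
      then have "c i *s v i = 0" using i by (simp add: u1_def)
      then show "c i = 0" using vnz[OF i] by simp
    qed
  qed
  show cb: "cbasis d (\<lambda>k. pw X (d - k) e)" using sp ind unfolding v_def by unfold_locales
  show "lchain d (\<lambda>k. pw X (d - k) e) X"
    using chain chain0 unfolding v_def by (intro lchain.intro cb lchain_axioms.intro) auto
qed



lemma decomp_unique:
  fixes X Y :: "'a::field^'n^'n"
  assumes d1: "is_decomp d Vs" "lowers d X Vs" "raises d Y Vs"
      and d2: "is_decomp d Ws" "lowers d X Ws" "raises d Y Ws"
  shows "Vs = Ws"
proof -
  obtain e where e: "e \<in> Vs d" "e \<noteq> 0" using dim1_nonzero decD(2)[OF d1(1), of d] by auto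
  define v where "v = (\<lambda>k. pw X (d - k) e)"
  note g1 = gc0[OF d1 e, folded v_def]
  have "\<forall>k\<in>{..<d}. \<exists>c. c \<noteq> 0 \<and> Y *v v k = c *s v (Suc k)" using g1(4) unfolding v_def by simp
  from bchoice[OF this] obtain c where c: "\<forall>k<d. c k \<noteq> 0 \<and> Y *v v k = c k *s v (Suc k)" by auto
  have rch: "rchain d v Y (\<lambda>i. c (i - 1))"
  proof (intro rchain.intro rchain_axioms.intro)
    show "cbasis d v" using g1(1) unfolding v_def .
    show "\<And>i. i < d \<Longrightarrow> Y *v v i = c (Suc i - 1) *s v (Suc i)" using c by simp
    show "Y *v v d = 0" using g1(5) unfolding v_def by simp
    show "\<And>i. 1 \<le> i \<Longrightarrow> i \<le> d \<Longrightarrow> c (i - 1) \<noteq> 0" using c by simp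
  qed
  obtain e' where e': "e' \<in> Ws d" "e' \<noteq> 0" using dim1_nonzero decD(2)[OF d2(1), of d] by auto
  define w where "w = (\<lambda>k. pw X (d - k) e')"
  note g2 = gc0[OF d2 e', folded w_def]
  have "\<forall>k\<in>{..<d}. \<exists>c. c \<noteq> 0 \<and> Y *v w k = c *s w (Suc k)" using g2(4) unfolding w_def by simp
  from bchoice[OF this] obtain c' where c': "\<forall>k<d. c' k \<noteq> 0 \<and> Y *v w k = c' k *s w (Suc k)" by auto
  have pp: "n \<le> d \<Longrightarrow> \<exists>p. p \<noteq> 0 \<and> pw Y n (w 0) = p *s w n" for n
  proof (induction n)
    case 0 show ?case by (rule exI[of _ 1]) simp
  next
    case (Suc n)
    then obtain p where p: "p \<noteq> 0" "pw Y n (w 0) = p *s w n" by auto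
    have "pw Y (Suc n) (w 0) = Y *v (p *s w n)" using p by simp
    also have "\<dots> = (p * c' n) *s w (Suc n)" using c' Suc.prems by (simp add: vector_scalar_commute)
    finally show ?case using p c' Suc.prems by (intro exI[of _ "p * c' n"]) simp
  qed
  obtain p where p: "p \<noteq> 0" "pw Y d (w 0) = p *s w d" using pp by blast
  define y where "y = pw Y d (w 0)"
  have wd: "w d = e'" unfolding w_def by simp
  have ynz: "y \<noteq> 0" using p e' wd unfolding y_def by simp
  have yW: "y \<in> Ws d" using p e' wd decD(1)[OF d2(1), of d] unfolding y_def by (simp add: vec.subspace_scale)
  have cz: "j < d \<Longrightarrow> coord d v y j = 0" for j
    using rchain.coord_pw_low[OF rch] unfolding y_def by simp
  have "y = (\<Sum>j\<le>d. coord d v y j *s v j)" using cbasis.coord_expand[OF g1(1)[folded v_def]] by simp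
  also have "\<dots> = coord d v y d *s v d" by (rule sum_last) (simp add: cz)
  finally have "y = coord d v y d *s e" unfolding v_def by simp
  moreover define k where "k = coord d v y d"
  ultimately have yk: "y = k *s e" by simp
  have yV: "y \<in> Vs d" unfolding yk using e decD(1)[OF d1(1), of d] by (simp add: vec.subspace_scale)
  have h1: "\<forall>k\<le>d. Vs k = vec.span {pw X (d - k) y}" using gc0(3)[OF d1 yV ynz] .
  have h2: "\<forall>k\<le>d. Ws k = vec.span {pw X (d - k) y}" using gc0(3)[OF d2 yW ynz] .
  show ?thesis
  proof
    fix k show "Vs k = Ws k"
    proof (cases "k \<le> d")
      case True then show ?thesis using h1 h2 by simp
    next
      case False then show ?thesis using decD(3)[OF d1(1)] decD(3)[OF d2(1)] by simp
    qed
  qed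
qed

lemma lr_decomp_eq:
  assumes "is_decomp d Vs" "lowers d X Vs" "raises d Y Vs"
  shows "lr_decomp d X Y = Vs"
  unfolding lr_decomp_def
proof (rule the_equality)
  show "is_decomp d Vs \<and> lowers d X Vs \<and> raises d Y Vs" using assms by blast
next
  fix Ws assume h: "is_decomp d Ws \<and> lowers d X Ws \<and> raises d Y Ws"
  show "Ws = Vs"
    using decomp_unique[where Vs=Ws and Ws=Vs and X=X and Y=Y and d=d] h assms by blast
qed

lemma pair_decomp:
  assumes "lr_pair d X Y"
  shows "is_decomp d (lr_decomp d X Y)" "lowers d X (lr_decomp d X Y)" "raises d Y (lr_decomp d X Y)"
proof -
  obtain Vs where "is_decomp d Vs" "lowers d X Vs" "raises d Y Vs" using assms unfolding lr_pair_def by blast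
  moreover then have "lr_decomp d X Y = Vs" by (rule lr_decomp_eq)
  ultimately show "is_decomp d (lr_decomp d X Y)" "lowers d X (lr_decomp d X Y)" "raises d Y (lr_decomp d X Y)" by auto
qed

lemma pair_nonzero:
  assumes "lr_pair d X Y"
  shows "\<exists>e. e \<in> lr_decomp d X Y d \<and> e \<noteq> 0"
  using dim1_nonzero decD(2)[OF pair_decomp(1)[OF assms], of d] by auto

lemma param_eq:
  fixes X Y :: "'a::field^'n^'n"
  assumes "lr_decomp d X Y i = vec.span {v}" "v \<noteq> 0" "Y *v (X *v v) = c *s v"
  shows "lr_param d X Y i = c"
  unfolding lr_param_def
proof (rule the_equality)
  show "\<forall>x\<in>lr_decomp d X Y i. (Y ** X) *v x = c *s x"
  proof
    fix x assume "x \<in> lr_decomp d X Y i"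
    then obtain k where k: "x = k *s v" using assms(1) by (auto simp: in_span1)
    have "(Y ** X) *v x = k *s (Y *v (X *v v))"
      by (simp add: k matrix_vector_mul_assoc[symmetric] vector_scalar_commute)
    also have "\<dots> = c *s x" using assms(3) k by (simp add: mult.commute)
    finally show "(Y ** X) *v x = c *s x" .
  qed
next
  fix \<phi> assume h: "\<forall>x\<in>lr_decomp d X Y i. (Y ** X) *v x = \<phi> *s x"
  have "v \<in> lr_decomp d X Y i" using assms(1) by (simp add: vec.span_base)
  then have "\<phi> *s v = (Y ** X) *v v" using h by simp
  also have "\<dots> = c *s v" using assms(3) by (simp add: matrix_vector_mul_assoc[symmetric])
  finally show "\<phi> = c" using assms(2) by simp
qed

lemma pair_chain:
  fixes X Y :: "'a::field^'n^'n"
  assumes lp: "lr_pair d X Y" and e: "e \<in> lr_decomp d X Y d" "e \<noteq> 0"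
  shows "cbasis d (\<lambda>k. pw X (d - k) e)" "lchain d (\<lambda>k. pw X (d - k) e) X"
        "rchain d (\<lambda>k. pw X (d - k) e) Y (lr_param d X Y)"
        "\<forall>k\<le>d. lr_decomp d X Y k = vec.span {pw X (d - k) e}"
proof -
  define v where "v = (\<lambda>k. pw X (d - k) e)"
  note pd = pair_decomp[OF lp]
  note g = gc0[OF pd e, folded v_def]
  show "cbasis d (\<lambda>k. pw X (d - k) e)" "lchain d (\<lambda>k. pw X (d - k) e) X"
    "\<forall>k\<le>d. lr_decomp d X Y k = vec.span {pw X (d - k) e}" using g unfolding v_def by auto
  have sp: "\<forall>k\<le>d. lr_decomp d X Y k = vec.span {v k}" using g(3) unfolding v_def by simp
  have rai: "Y *v v i = lr_param d X Y (Suc i) *s v (Suc i) \<and> lr_param d X Y (Suc i) \<noteq> 0" if i: "i < d" for i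
  proof -
    obtain c where c: "c \<noteq> 0" "Y *v v i = c *s v (Suc i)" using g(4) i unfolding v_def by auto
    have "lr_param d X Y (Suc i) = c"
    proof (rule param_eq)
      show "lr_decomp d X Y (Suc i) = vec.span {v (Suc i)}" using sp i by simp
      show "v (Suc i) \<noteq> 0" using cbasis.nonzero[OF g(1)] i by simp
      have "X *v v (Suc i) = v i" using lchain.low[OF g(2), of "Suc i"] i by simp
      then show "Y *v (X *v v (Suc i)) = c *s v (Suc i)" using c by simp
    qed
    then show ?thesis using c by simp
  qed
  show "rchain d (\<lambda>k. pw X (d - k) e) Y (lr_param d X Y)"
  proof (intro rchain.intro rchain_axioms.intro)
    show "cbasis d (\<lambda>k. pw X (d - k) e)" using g(1) unfolding v_def .
    show "\<And>i. i < d \<Longrightarrow> Y *v pw X (d - i) e = lr_param d X Y (Suc i) *s pw X (d - Suc i) e"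
      using rai unfolding v_def by blast
    show "Y *v pw X (d - d) e = 0" using g(5) .
    show "\<And>i. 1 \<le> i \<Longrightarrow> i \<le> d \<Longrightarrow> lr_param d X Y i \<noteq> 0"
    proof -
      fix i :: nat assume "1 \<le> i" "i \<le> d"
      then show "lr_param d X Y i \<noteq> 0" using rai[of "i - 1"] by simp
    qed
  qed
qed

lemma sum_rev: "(\<Sum>i\<le>d. f (d - i)) = (\<Sum>i\<le>(d::nat). (f i :: 'b::comm_monoid_add))"
  by (rule sum.reindex_bij_witness[where i="\<lambda>i. d - i" and j="\<lambda>i. d - i"]) auto

lemma rev_pair:
  fixes A C :: "'a::field^'n^'n"
  assumes lp: "lr_pair d C A"
  shows "lr_pair d A C" "\<And>k. k \<le> d \<Longrightarrow> lr_decomp d A C k = lr_decomp d C A (d - k)"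
proof -
  define U where "U = lr_decomp d C A"
  note pd = pair_decomp[OF lp, folded U_def]
  define R where "R = (\<lambda>i. if i \<le> d then U (d - i) else {0})"
  have lo: "lowers d A R"
    unfolding lowers_def
  proof (intro conjI allI impI)
    fix i assume i: "1 \<le> i \<and> i \<le> d"
    then have "(\<lambda>v. A *v v) ` U (d - i) = U (Suc (d - i))" using pd(3) unfolding raises_def by auto
    moreover have eq: "Suc (d - i) = d - (i - 1)" using i by arith
    moreover have "i - 1 \<le> d" using i by arith
    then have "R (i - 1) = U (d - (i - 1))" unfolding R_def by simp
    then have "R (i - 1) = U (Suc (d - i))" by (simp only: eq)
    moreover have "R i = U (d - i)" using i unfolding R_def by simp
    ultimately show "(\<lambda>v. A *v v) ` R i = R (i - 1)" by simp
  next
    show "(\<lambda>v. A *v v) ` R 0 = {0}" using pd(3) unfolding raises_def R_def by simp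
  qed
  have ra: "raises d C R"
    unfolding raises_def
  proof (intro conjI allI impI)
    fix i assume i: "i < d"
    then have "(\<lambda>v. C *v v) ` U (d - i) = U (d - i - 1)" using pd(2) unfolding lowers_def by auto
    moreover have "d - i - 1 = d - Suc i" by simp
    ultimately show "(\<lambda>v. C *v v) ` R i = R (Suc i)" using i unfolding R_def by simp
  next
    show "(\<lambda>v. C *v v) ` R d = {0}" using pd(2) unfolding lowers_def R_def by simp
  qed
  have dec: "is_decomp d R"
    unfolding is_decomp_def
  proof (intro conjI allI impI)
    fix i assume "i \<le> d" then show "vec.subspace (R i)" "vec.dim (R i) = 1"
      using decD(1,2)[OF pd(1), of "d - i"] unfolding R_def by auto
  next
    fix i assume "d < i" then show "R i = {0}" unfolding R_def by simp
  next
    fix x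
    obtain u where u: "(\<forall>i\<le>d. u i \<in> U i) \<and> (\<forall>i>d. u i = 0) \<and> x = (\<Sum>i\<le>d. u i)"
      using decD(4)[OF pd(1), of x] by blast
    define u' where "u' = (\<lambda>i. if i \<le> d then u (d - i) else 0)"
    show "\<exists>!u. (\<forall>i\<le>d. u i \<in> R i) \<and> (\<forall>i>d. u i = 0) \<and> x = (\<Sum>i\<le>d. u i)"
    proof (rule ex1I[of _ u'])
      have "(\<Sum>i\<le>d. u' i) = (\<Sum>i\<le>d. u (d - i))" unfolding u'_def by simp
      also have "\<dots> = (\<Sum>i\<le>d. u i)" by (rule sum_rev)
      finally show "(\<forall>i\<le>d. u' i \<in> R i) \<and> (\<forall>i>d. u' i = 0) \<and> x = (\<Sum>i\<le>d. u' i)"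
        using u unfolding u'_def R_def by auto
    next
      fix u1 assume h: "(\<forall>i\<le>d. u1 i \<in> R i) \<and> (\<forall>i>d. u1 i = 0) \<and> x = (\<Sum>i\<le>d. u1 i)"
      define u2 where "u2 = (\<lambda>i. if i \<le> d then u1 (d - i) else 0)"
      have "(\<Sum>i\<le>d. u2 i) = (\<Sum>i\<le>d. u1 (d - i))" unfolding u2_def by simp
      also have "\<dots> = (\<Sum>i\<le>d. u1 i)" by (rule sum_rev)
      moreover have "u1 (d - i) \<in> U i" if "i \<le> d" for i
      proof -
        have "u1 (d - i) \<in> R (d - i)" using h by simp
        then show ?thesis using that unfolding R_def by simp
      qed
      ultimately have P2: "(\<forall>i\<le>d. u2 i \<in> U i) \<and> (\<forall>i>d. u2 i = 0) \<and> x = (\<Sum>i\<le>d. u2 i)"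
        using h unfolding u2_def by auto
      have "u2 = u"
        by (rule ex1_eq[where P="\<lambda>u. (\<forall>i\<le>d. u i \<in> U i) \<and> (\<forall>i>d. u i = 0) \<and> x = (\<Sum>i\<le>d. u i)", OF decD(4)[OF pd(1), of x] P2 u])
      show "u1 = u'"
      proof
        fix i show "u1 i = u' i"
        proof (cases "i \<le> d")
          case True
          have "u1 i = u2 (d - i)" using True unfolding u2_def by simp
          then show ?thesis using True \<open>u2 = u\<close> unfolding u'_def by simp
        next
          case False then show ?thesis using h unfolding u'_def by simp
        qed
      qed
    qed
  qed
  show "lr_pair d A C" unfolding lr_pair_def using dec lo ra by blast
  have "lr_decomp d A C = R" by (rule lr_decomp_eq[OF dec lo ra])
  then show "\<And>k. k \<le> d \<Longrightarrow> lr_decomp d A C k = lr_decomp d C A (d - k)"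
    unfolding R_def U_def by simp
qed



locale lrchain = lchain d v X + rchain d v Y \<phi> for d v X Y \<phi>
begin

lemma XY_basis: "j \<le> d \<Longrightarrow> X *v (Y *v v j) = (if Suc j \<le> d then \<phi> (Suc j) else 0) *s v j"
proof -
  assume j: "j \<le> d"
  show ?thesis
  proof (cases "j < d")
    case True
    then have "X *v (Y *v v j) = \<phi> (Suc j) *s (X *v v (Suc j))" by (simp add: rai vector_scalar_commute)
    also have "\<dots> = \<phi> (Suc j) *s v j" using low[of "Suc j"] True by simp
    finally show ?thesis using True by simp
  next
    case False then have "j = d" using j by simp
    then show ?thesis by (simp add: raid)
  qed
qed

lemma mapflag: "pw X m x = 0 \<Longrightarrow> pw X (Suc m) (Y *v x) = 0"
proof -
  assume h: "pw X m x = 0"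
  have "Y *v x = (\<Sum>j\<le>d. coord d v x j *s (Y *v v j))"
    by (subst coord_expand[of x]) (simp add: mv_sum vector_scalar_commute)
  then have "pw X (Suc m) (Y *v x) = (\<Sum>j\<le>d. coord d v x j *s pw X (Suc m) (Y *v v j))"
    by (simp add: pw_sum pw_scale del: funpow.simps)
  also have "\<dots> = (\<Sum>j\<le>d. 0)"
  proof (rule sum.cong)
    fix j assume j: "j \<in> {..d}"
    show "coord d v x j *s pw X (Suc m) (Y *v v j) = 0"
    proof (cases "m \<le> j")
      case True then show ?thesis using flag[OF h] by simp
    next
      case False
      show ?thesis
      proof (cases "j < d")
        case True
        then have "pw X (Suc m) (Y *v v j) = \<phi> (Suc j) *s pw X (Suc m) (v (Suc j))" by (simp add: rai pw_scale del: funpow.simps)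
        also have "\<dots> = 0" using pw_kill[of "Suc j" "Suc m"] True False by simp
        finally show ?thesis by simp
      next
        case False2: False
        then have "j = d" using j by simp
        then show ?thesis by (simp add: raid pw_zero del: funpow.simps)
      qed
    qed
  qed simp
  finally show ?thesis by simp
qed

lemma bc_eig:
  assumes m: "m \<le> d" and cz: "\<And>j. m < j \<Longrightarrow> coord d v x j = 0"
  shows "pw X m (X *v (Y *v x) - (if Suc m \<le> d then \<phi> (Suc m) else 0) *s x) = 0"
proof -
  define psi where "psi = (\<lambda>s. if s \<le> d then \<phi> s else 0)"
  have "X *v (Y *v x) - psi (Suc m) *s x = (\<Sum>j\<le>d. (coord d v x j * (psi (Suc j) - psi (Suc m))) *s v j)"
  proof -
    have "X *v (Y *v x) = (\<Sum>j\<le>d. coord d v x j *s (X *v (Y *v v j)))"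
      by (subst coord_expand[of x]) (simp add: mv_sum vector_scalar_commute)
    also have "\<dots> = (\<Sum>j\<le>d. (coord d v x j * psi (Suc j)) *s v j)"
      by (rule sum.cong) (auto simp: XY_basis psi_def)
    finally have 1: "X *v (Y *v x) = (\<Sum>j\<le>d. (coord d v x j * psi (Suc j)) *s v j)" .
    have 2: "psi (Suc m) *s x = (\<Sum>j\<le>d. (coord d v x j * psi (Suc m)) *s v j)"
      by (subst coord_expand[of x]) (simp add: vec.scale_sum_right mult.commute)
    have 3: "(\<Sum>j\<le>d. (coord d v x j * (psi (Suc j) - psi (Suc m))) *s v j)
      = (\<Sum>j\<le>d. (coord d v x j * psi (Suc j) - coord d v x j * psi (Suc m)) *s v j)"
      by (simp add: right_diff_distrib)
    also have "\<dots> = (\<Sum>j\<le>d. (coord d v x j * psi (Suc j)) *s v j) - (\<Sum>j\<le>d. (coord d v x j * psi (Suc m)) *s v j)"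
      by (simp only: vec.scale_left_diff_distrib sum_subtractf)
    finally show ?thesis unfolding 1 2 by simp
  qed
  then have "pw X m (X *v (Y *v x) - psi (Suc m) *s x) = (\<Sum>j\<le>d. (coord d v x j * (psi (Suc j) - psi (Suc m))) *s pw X m (v j))"
    by (simp add: pw_sum pw_scale del: funpow.simps)
  also have "\<dots> = (\<Sum>j\<le>d. 0)"
  proof (rule sum.cong)
    fix j assume j: "j \<in> {..d}"
    show "(coord d v x j * (psi (Suc j) - psi (Suc m))) *s pw X m (v j) = 0"
    proof (cases "m < j")
      case True then show ?thesis using cz by simp
    next
      case False
      show ?thesis
      proof (cases "j = m")
        case True then show ?thesis by simp
      next
        case False2: False
        then have "j < m" using False by simp
        then show ?thesis using pw_kill[of j m] j by simp
      qed
    qed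
  qed simp
  finally show ?thesis unfolding psi_def by simp
qed

end

lemma lrchain_intro: "lchain d v X \<Longrightarrow> rchain d v Y \<phi> \<Longrightarrow> lrchain d v X Y \<phi>"
  unfolding lrchain_def lchain_def rchain_def by auto

lemma (in lchain) pw_top: "k \<le> d \<Longrightarrow> pw X (d - k) (v d) = v k"
  using pw_basis[of d "d - k"] by simp

definition toe :: "nat \<Rightarrow> (nat \<Rightarrow> 'a::field^'n) \<Rightarrow> (nat \<Rightarrow> 'a^'n) \<Rightarrow> nat \<Rightarrow> 'a" where
  "toe d u w m = (if m \<le> d then coord d u (w d) (d - m) else 0)"

lemma sum_if_le:
  fixes f :: "nat \<Rightarrow> 'b::comm_monoid_add"
  assumes "k \<le> d"
  shows "(\<Sum>i\<le>d. if i \<le> k then f i else 0) = (\<Sum>i\<le>k. f i)"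
proof -
  have "(\<Sum>i\<le>d. if i \<le> k then f i else 0) = (\<Sum>i\<in>{..d} \<inter> {i. i \<le> k}. f i)"
    by (simp add: sum.inter_restrict)
  also have "{..d} \<inter> {i. i \<le> k} = {..k}" using assms by auto
  finally show ?thesis by simp
qed

lemma toeplitz_exists:
  assumes u: "lchain d u X" and w: "lchain d w X" and top: "coord d u (w d) d = 1"
  shows "toeplitz_transition d u w (toe d u w)"
  unfolding toeplitz_transition_def
proof (intro conjI allI impI)
  show "toe d u w 0 = 1" using top by (simp add: toe_def)
next
  fix i assume "d < i" then show "toe d u w i = 0" by (simp add: toe_def)
next
  fix k assume k: "k \<le> d"
  have cw: "coord d u (w k) i = (if i \<le> k then toe d u w (k - i) else 0)" if i: "i \<le> d" for i
  proof -
    have "w k = pw X (d - k) (w d)" using lchain.pw_top[OF w k] by simp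
    then have "coord d u (w k) i = (if i + (d - k) \<le> d then coord d u (w d) (i + (d - k)) else 0)"
      using lchain.coord_pw[OF u] by simp
    moreover have "i + (d - k) \<le> d \<longleftrightarrow> i \<le> k" using k by arith
    moreover have "i \<le> k \<Longrightarrow> i + (d - k) = d - (k - i)" using k by arith
    ultimately show ?thesis using k by (auto simp: toe_def)
  qed
  have "w k = (\<Sum>i\<le>d. coord d u (w k) i *s u i)" using cbasis.coord_expand[OF lchain.axioms(1)[OF u]] by simp
  also have "\<dots> = (\<Sum>i\<le>d. if i \<le> k then toe d u w (k - i) *s u i else 0)"
    by (rule sum.cong) (auto simp: cw)
  also have "\<dots> = (\<Sum>i\<le>k. toe d u w (k - i) *s u i)" by (rule sum_if_le[OF k])
  finally show "w k = (\<Sum>i\<le>k. toe d u w (k - i) *s u i)" .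
qed

lemma toe_coord:
  assumes "cbasis d u" "toeplitz_transition d u w \<gamma>" "m \<le> d" "j \<le> d"
  shows "coord d u (w m) j = (if j \<le> m then \<gamma> (m - j) else 0)"
proof -
  have "w m = (\<Sum>i\<le>m. \<gamma> (m - i) *s u i)" using assms(2,3) unfolding toeplitz_transition_def by blast
  also have "\<dots> = (\<Sum>i\<le>d. if i \<le> m then \<gamma> (m - i) *s u i else 0)"
    by (rule sum_if_le[OF assms(3), symmetric])
  also have "\<dots> = (\<Sum>i\<le>d. (if i \<le> m then \<gamma> (m - i) else 0) *s u i)"
    by (rule sum.cong) auto
  finally have "w m = (\<Sum>i\<le>d. (if i \<le> m then \<gamma> (m - i) else 0) *s u i)" .
  from cbasis.coord_unique[OF assms(1) this assms(4)] show ?thesis by simp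
qed



lemma cb_lr_basis:
  assumes cb: "cbasis d u" and lc: "lchain d u X" and mem: "\<forall>i\<le>d. u i \<in> lr_decomp d X Y i"
  shows "lr_basis d X Y u"
  unfolding lr_basis_def
proof (intro conjI)
  show inj: "inj_on u {..d}"
  proof (rule inj_onI)
    fix i j assume ij: "i \<in> {..d}" "j \<in> {..d}" "u i = u j"
    then have "coord d u (u i) i = coord d u (u j) i" by simp
    then show "i = j" using cbasis.coord_basis[OF cb, of i i] cbasis.coord_basis[OF cb, of i j] ij
      by (auto split: if_splits)
  qed
  show "vec.independent (u ` {..d})"
    unfolding vec.independent_explicit
  proof (intro conjI allI impI)
    show "finite (u ` {..d})" by simp
    fix c assume "(\<Sum>v\<in>u ` {..d}. c v *s v) = 0"
    then have "(\<Sum>i\<le>d. c (u i) *s u i) = 0" using sum.reindex[OF inj, of "\<lambda>v. c v *s v"] by simp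
    from cbasis.ind[OF cb, unfolded indep_def, rule_format, OF this] have "\<forall>i\<le>d. c (u i) = 0" by blast
    then show "\<forall>v\<in>u ` {..d}. c v = 0" by auto
  qed
  show "vec.span (u ` {..d}) = UNIV"
  proof -
    have "x \<in> vec.span (u ` {..d})" for x
    proof -
      have "(\<Sum>i\<le>d. coord d u x i *s u i) \<in> vec.span (u ` {..d})"
        by (intro vec.span_sum vec.span_scale vec.span_base) auto
      then show ?thesis using cbasis.coord_expand[OF cb, of x] by simp
    qed
    then show ?thesis by auto
  qed
  show "\<forall>i\<le>d. u i \<in> lr_decomp d X Y i" by (rule mem)
  show "\<forall>i. 1 \<le> i \<and> i \<le> d \<longrightarrow> X *v u i = u (i - 1)" using lchain.low[OF lc] by auto
qed

lemma lrb_pw: "lr_basis d X Y u \<Longrightarrow> n \<le> d \<Longrightarrow> pw X n (u d) = u (d - n)"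
proof (induction n)
  case 0 then show ?case by simp
next
  case (Suc n)
  then have "pw X (Suc n) (u d) = X *v u (d - n)" by simp
  also have "\<dots> = u (d - n - 1)" using Suc.prems unfolding lr_basis_def by auto
  finally show ?case by simp
qed

lemma lrb_nz: "lr_basis d X Y u \<Longrightarrow> u d \<noteq> 0"
proof
  assume "lr_basis d X Y u" "u d = 0"
  then have "0 \<in> u ` {..d}" by (metis atMost_iff image_eqI order_refl)
  then have "vec.dependent (u ` {..d})" by (rule vec.dependent_zero)
  then show False using \<open>lr_basis d X Y u\<close> unfolding lr_basis_def by blast
qed

lemma lrb_scaled:
  assumes pY: "lr_pair d X Y" and e1: "e1 \<in> lr_decomp d X Y d" "e1 \<noteq> 0" and lb: "lr_basis d X Y u2"
  shows "\<exists>s. s \<noteq> 0 \<and> (\<forall>i\<le>d. u2 i = s *s pw X (d - i) e1)"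
proof -
  define u where "u = (\<lambda>k. pw X (d - k) e1)"
  note pc = pair_chain[OF pY e1, folded u_def]
  have "u2 d \<in> lr_decomp d X Y d" using lb unfolding lr_basis_def by auto
  then have "u2 d \<in> vec.span {u d}" using pc(4) unfolding u_def by simp
  then obtain s where s: "u2 d = s *s u d" by (auto simp: in_span1)
  have snz: "s \<noteq> 0" using lrb_nz[OF lb] s by auto
  have "u2 i = s *s u i" if i: "i \<le> d" for i
  proof -
    have "u2 i = pw X (d - i) (u2 d)" using lrb_pw[OF lb, of "d - i"] i by simp
    also have "\<dots> = s *s pw X (d - i) (u d)" by (simp add: s pw_scale)
    also have "\<dots> = s *s u i" using lchain.pw_top[OF pc(2) i] by simp
    finally show ?thesis .
  qed
  then show ?thesis using snz unfolding u_def by blast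
qed

lemma trans_eq:
  fixes X Y Z :: "'a::field^'n^'n"
  assumes pY: "lr_pair d X Y" and pZ: "lr_pair d X Z"
    and e1: "e1 \<in> lr_decomp d X Y d" "e1 \<noteq> 0" and e2: "e2 \<in> lr_decomp d X Z d" "e2 \<noteq> 0"
    and top: "coord d (\<lambda>k. pw X (d - k) e1) e2 d = 1"
  shows "toeplitz_transition d (\<lambda>k. pw X (d - k) e1) (\<lambda>k. pw X (d - k) e2) (toe d (\<lambda>k. pw X (d - k) e1) (\<lambda>k. pw X (d - k) e2))"
    "trans_params d X Y Z = toe d (\<lambda>k. pw X (d - k) e1) (\<lambda>k. pw X (d - k) e2)"
proof -
  define u where "u = (\<lambda>k. pw X (d - k) e1)"
  define w where "w = (\<lambda>k. pw X (d - k) e2)"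
  define \<gamma> where "\<gamma> = toe d u w"
  note pu = pair_chain[OF pY e1, folded u_def]
  note pw' = pair_chain[OF pZ e2, folded w_def]
  have wd: "w d = e2" unfolding w_def by simp
  have T: "toeplitz_transition d u w \<gamma>"
    unfolding \<gamma>_def by (rule toeplitz_exists[OF pu(2) pw'(2)]) (use top wd in \<open>simp add: u_def\<close>)
  then show "toeplitz_transition d (\<lambda>k. pw X (d - k) e1) (\<lambda>k. pw X (d - k) e2) (toe d (\<lambda>k. pw X (d - k) e1) (\<lambda>k. pw X (d - k) e2))"
    unfolding \<gamma>_def u_def w_def .
  have "\<forall>i\<le>d. u i \<in> lr_decomp d X Y i" using pu(4) unfolding u_def by (simp add: vec.span_base)
  then have lbu: "lr_basis d X Y u" by (rule cb_lr_basis[OF pu(1) pu(2)])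
  have "\<forall>i\<le>d. w i \<in> lr_decomp d X Z i" using pw'(4) unfolding w_def by (simp add: vec.span_base)
  then have lbw: "lr_basis d X Z w" by (rule cb_lr_basis[OF pw'(1) pw'(2)])
  have "trans_params d X Y Z = \<gamma>"
    unfolding trans_params_def
  proof (rule the_equality)
    show "\<exists>u w. lr_basis d X Y u \<and> lr_basis d X Z w \<and> toeplitz_transition d u w \<gamma>"
      using lbu lbw T by blast
  next
    fix \<gamma>2 assume "\<exists>u w. lr_basis d X Y u \<and> lr_basis d X Z w \<and> toeplitz_transition d u w \<gamma>2"
    then obtain u2 w2 where h: "lr_basis d X Y u2" "lr_basis d X Z w2" "toeplitz_transition d u2 w2 \<gamma>2" by blast
    obtain s where s: "s \<noteq> 0" "\<forall>i\<le>d. u2 i = s *s u i" using lrb_scaled[OF pY e1 h(1)] unfolding u_def by blast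
    obtain t where t: "t \<noteq> 0" "\<forall>i\<le>d. w2 i = t *s w i" using lrb_scaled[OF pZ e2 h(2)] unfolding w_def by blast
    have cbu: "cbasis d u" by (rule pu(1))
    have c1: "coord d u (w2 d) j = \<gamma>2 (d - j) * s" if j: "j \<le> d" for j
    proof -
      have "w2 d = (\<Sum>i\<le>d. \<gamma>2 (d - i) *s u2 i)" using h(3) unfolding toeplitz_transition_def by blast
      also have "\<dots> = (\<Sum>i\<le>d. (\<gamma>2 (d - i) * s) *s u i)" by (rule sum.cong) (auto simp: s)
      finally have "w2 d = (\<Sum>i\<le>d. (\<gamma>2 (d - i) * s) *s u i)" .
      from cbasis.coord_unique[OF cbu this j] show ?thesis by simp
    qed
    have c2: "coord d u (w2 d) j = t * \<gamma> (d - j)" if j: "j \<le> d" for j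
      using t toe_coord[OF cbu T order_refl j] j by (simp add: cbasis.coord_scale[OF cbu])
    have g0: "\<gamma>2 0 = 1" "\<gamma> 0 = 1" using h(3) T unfolding toeplitz_transition_def by auto
    have "t = s" using c1[of d] c2[of d] g0 by simp
    show "\<gamma>2 = \<gamma>"
    proof
      fix m show "\<gamma>2 m = \<gamma> m"
      proof (cases "m \<le> d")
        case True
        have A: "coord d u (w2 d) (d - m) = \<gamma>2 m * s" using c1[of "d - m"] True by simp
        have B: "coord d u (w2 d) (d - m) = s * \<gamma> m" using c2[of "d - m"] True \<open>t = s\<close> by simp
        have "\<gamma>2 m * s = s * \<gamma> m" by (rule trans[OF A[symmetric] B])
        then have "s * \<gamma>2 m = s * \<gamma> m" by (simp add: mult.commute)
        then show ?thesis using s(1) by simp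
      next
        case False then show ?thesis using h(3) T unfolding toeplitz_transition_def by auto
      qed
    qed
  qed
  then show "trans_params d X Y Z = toe d (\<lambda>k. pw X (d - k) e1) (\<lambda>k. pw X (d - k) e2)"
    unfolding \<gamma>_def u_def w_def .
qed



locale tdata =
  fixes d :: nat and A B C :: "'a::field^'n^'n" and u z w :: "nat \<Rightarrow> 'a^'n" and \<phi> \<phi>' \<psi> \<gamma> :: "nat \<Rightarrow> 'a"
  assumes u1: "lchain d u A" and u2: "rchain d u B \<phi>" and z1: "lchain d z B" and z2: "rchain d z C \<phi>'"
    and w1: "lchain d w A" and w2: "rchain d w C \<psi>" and toe: "toeplitz_transition d u w \<gamma>"
begin

lemma cbu: "cbasis d u" using u1 unfolding lchain_def by blast
lemma lrw: "lrchain d w A C \<psi>" by (rule lrchain_intro[OF w1 w2])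
lemma lrz: "lrchain d z B C \<phi>'" by (rule lrchain_intro[OF z1 z2])

definition ps where "ps s = (if 1 \<le> s \<and> s \<le> d then \<psi> s else 0)"

lemma cu_hi: "k \<le> d \<Longrightarrow> Suc (Suc k) \<le> j \<Longrightarrow> coord d u (C *v u k) j = 0"
proof -
  assume k: "k \<le> d" and j: "Suc (Suc k) \<le> j"
  have "pw A (Suc k) (u k) = 0" by (rule lchain.pw_kill[OF u1 k]) simp
  then have "pw A (Suc (Suc k)) (C *v u k) = 0" by (rule lrchain.mapflag[OF lrw])
  then show ?thesis using lchain.flag[OF u1] j by blast
qed

lemma cu_lo: "k \<le> d \<Longrightarrow> j + 2 \<le> k \<Longrightarrow> coord d u (C *v u k) j = 0"
proof -
  assume k: "k \<le> d" and j: "j + 2 \<le> k"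
  have "pw B (Suc (d - k)) (u k) = 0" by (rule rchain.pw_rkill[OF u2 k]) arith
  then have "pw B (Suc (Suc (d - k))) (C *v u k) = 0" by (rule lrchain.mapflag[OF lrz])
  moreover have "j + Suc (Suc (d - k)) \<le> d" using j k by arith
  ultimately show ?thesis using rchain.flag_r[OF u2] by blast
qed

lemma cw: "k \<le> d \<Longrightarrow> C *v w k = ps (Suc k) *s w (Suc k)"
proof -
  assume k: "k \<le> d"
  show ?thesis
  proof (cases "k < d")
    case True then show ?thesis using rchain.rai[OF w2 True] by (simp add: ps_def)
  next
    case False then have "k = d" using k by simp
    then show ?thesis using rchain.raid[OF w2] by (simp add: ps_def)
  qed
qed

lemma cu_expand: "k \<le> d \<Longrightarrow> coord d u (C *v w k) j = (\<Sum>i\<le>k. \<gamma> (k - i) * coord d u (C *v u i) j)"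
proof -
  assume k: "k \<le> d"
  have "w k = (\<Sum>i\<le>k. \<gamma> (k - i) *s u i)" using toe k unfolding toeplitz_transition_def by blast
  then have "C *v w k = (\<Sum>i\<le>k. \<gamma> (k - i) *s (C *v u i))" by (simp add: mv_sum vector_scalar_commute)
  then show ?thesis by (simp add: cbasis.coord_sum[OF cbu] cbasis.coord_scale[OF cbu])
qed

lemma cwc: "k \<le> d \<Longrightarrow> j \<le> d \<Longrightarrow> coord d u (C *v w k) j = ps (Suc k) * (if j \<le> Suc k then \<gamma> (Suc k - j) else 0)"
proof -
  assume k: "k \<le> d" and j: "j \<le> d"
  show ?thesis
  proof (cases "Suc k \<le> d")
    case True
    then show ?thesis using cw[OF k] toe_coord[OF cbu toe True j] by (simp add: cbasis.coord_scale[OF cbu])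
  next
    case False
    then have "ps (Suc k) = 0" by (simp add: ps_def)
    then show ?thesis using cw[OF k] by (simp add: cbasis.coord_scale[OF cbu] cbasis.coord_zero[OF cbu])
  qed
qed

lemma g0: "\<gamma> 0 = 1" using toe unfolding toeplitz_transition_def by blast

lemma cu_up: "k < d \<Longrightarrow> coord d u (C *v u k) (Suc k) = ps (Suc k)"
proof -
  assume k: "k < d"
  have "coord d u (C *v w k) (Suc k) = (\<Sum>i\<le>k. \<gamma> (k - i) * coord d u (C *v u i) (Suc k))"
    using cu_expand k by simp
  also have "\<dots> = \<gamma> (k - k) * coord d u (C *v u k) (Suc k)"
    by (rule sum_last) (use cu_hi k in simp)
  finally have "coord d u (C *v w k) (Suc k) = coord d u (C *v u k) (Suc k)" using g0 by simp
  moreover have "coord d u (C *v w k) (Suc k) = ps (Suc k)" using cwc[of k "Suc k"] k g0 by simp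
  ultimately show ?thesis by simp
qed

lemma cu_diag: "k \<le> d \<Longrightarrow> coord d u (C *v u k) k = \<gamma> 1 * (ps (Suc k) - ps k)"
proof -
  assume k: "k \<le> d"
  have R: "coord d u (C *v w k) k = ps (Suc k) * \<gamma> 1" using cwc[OF k k] by simp
  show ?thesis
  proof (cases k)
    case 0
    have "coord d u (C *v w k) k = \<gamma> 0 * coord d u (C *v u 0) 0" using cu_expand[OF k] 0 by simp
    then show ?thesis using R g0 0 by (simp add: ps_def mult.commute)
  next
    case (Suc k')
    have "coord d u (C *v w k) k = (\<Sum>i\<le>Suc k'. \<gamma> (Suc k' - i) * coord d u (C *v u i) k)"
      using cu_expand[OF k] Suc by simp
    also have "\<dots> = (\<Sum>i\<le>k'. \<gamma> (Suc k' - i) * coord d u (C *v u i) k) + \<gamma> 0 * coord d u (C *v u k) k"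
      using Suc by simp
    also have "(\<Sum>i\<le>k'. \<gamma> (Suc k' - i) * coord d u (C *v u i) k) = \<gamma> (Suc k' - k') * coord d u (C *v u k') k"
      by (rule sum_last) (use cu_hi k Suc in simp)
    also have "\<dots> = \<gamma> 1 * ps k" using cu_up[of k'] Suc k by simp
    finally have "coord d u (C *v w k) k = \<gamma> 1 * ps k + coord d u (C *v u k) k" using g0 by simp
    then show ?thesis using R by (simp add: algebra_simps)
  qed
qed

lemma cu_down: "1 \<le> k \<Longrightarrow> k \<le> d \<Longrightarrow> coord d u (C *v u k) (k - 1) = \<phi>' (d + 1 - k) / \<phi> k"
proof -
  assume k1: "1 \<le> k" and k: "k \<le> d"
  define m where "m = d - k"
  have "pw B (Suc m) (u k) = 0" unfolding m_def by (rule rchain.pw_rkill[OF u2 k]) arith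
  then have cz: "\<And>j. m < j \<Longrightarrow> coord d z (u k) j = 0" using lchain.flag[OF z1] by (metis Suc_leI)
  have m: "m \<le> d" unfolding m_def by simp
  have "pw B m (B *v (C *v u k) - (if Suc m \<le> d then \<phi>' (Suc m) else 0) *s u k) = 0"
    by (rule lrchain.bc_eig[OF lrz m cz])
  moreover have "Suc m \<le> d" "Suc m = d + 1 - k" using k1 k unfolding m_def by arith+
  ultimately have "pw B m (B *v (C *v u k) - \<phi>' (d + 1 - k) *s u k) = 0" by simp
  moreover have "k + m \<le> d" unfolding m_def using k by simp
  ultimately have "coord d u (B *v (C *v u k) - \<phi>' (d + 1 - k) *s u k) k = 0"
    using rchain.flag_r[OF u2] by blast
  then have "coord d u (B *v (C *v u k)) k = \<phi>' (d + 1 - k)"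
    using k by (simp add: cbasis.coord_diff[OF cbu] cbasis.coord_scale[OF cbu] cbasis.coord_basis[OF cbu])
  moreover have "coord d u (B *v (C *v u k)) k = \<phi> k * coord d u (C *v u k) (k - 1)"
    using rchain.coord_raise[OF u2 k] k1 by simp
  moreover have "\<phi> k \<noteq> 0" using rchain.phinz[OF u2 k1 k] .
  ultimately show ?thesis by (simp add: field_simps)
qed

lemma cu_formula:
  assumes k: "k \<le> d" and j: "j \<le> d"
  shows "coord d u (C *v u k) j =
    (if j = Suc k then ps (Suc k) else if j = k then \<gamma> 1 * (ps (Suc k) - ps k)
     else if Suc j = k then \<phi>' (d + 1 - k) / \<phi> k else 0)"
proof -
  consider "j = Suc k" | "j = k" | "Suc j = k" | "Suc (Suc k) \<le> j" | "j + 2 \<le> k" by arith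
  then show ?thesis
  proof cases
    case 1 then show ?thesis using cu_up j by simp
  next
    case 2 then show ?thesis using cu_diag k by simp
  next
    case 3
    then have "coord d u (C *v u k) (k - 1) = \<phi>' (d + 1 - k) / \<phi> k" using cu_down k by simp
    then show ?thesis using 3 by auto
  next
    case 4 then show ?thesis using cu_hi k by simp
  next
    case 5 then show ?thesis using cu_lo k by auto
  qed
qed

end



lemma (in cbasis) trace_rank1:
  "trace (M ** matrix (\<lambda>x. coord d v x i *s v i)) = coord d v (M *v v i) i"
proof -
  have "trace (M ** matrix (\<lambda>x. coord d v x i *s v i))
      = (\<Sum>r\<in>UNIV. \<Sum>k\<in>UNIV. M $ r $ k * (coord d v (axis r 1) i * v i $ k))"
    by (simp add: trace_def matrix_matrix_mult_def matrix_def)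
  also have "\<dots> = (\<Sum>r\<in>UNIV. coord d v (axis r 1) i * (M *v v i) $ r)"
    by (simp add: matrix_vector_mult_def sum_distrib_left mult_ac)
  also have "\<dots> = coord d v (\<Sum>r\<in>UNIV. (M *v v i) $ r *s axis r 1) i"
    by (simp add: coord_sum coord_scale mult.commute)
  also have "(\<Sum>r\<in>UNIV. (M *v v i) $ r *s axis r 1) = M *v v i" by (rule basis_expansion)
  finally show ?thesis .
qed

lemma lin_coordmap:
  assumes "cbasis d u"
  shows "Vector_Spaces.linear (*s) (*s) (\<lambda>x. \<Sum>i\<le>d. coord d u x i *s (u' i :: 'a::field^'n))"
  apply (rule Vector_Spaces.linear_iff[THEN iffD2])
  apply (intro conjI allI)
     apply (rule vec.vector_space_axioms)
    apply (rule vec.vector_space_axioms)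
   apply (simp add: cbasis.coord_add[OF assms] vec.scale_left_distrib sum.distrib)
  apply (simp add: cbasis.coord_scale[OF assms] vec.scale_sum_right)
  done

definition tmat :: "nat \<Rightarrow> (nat \<Rightarrow> 'a::field^'n) \<Rightarrow> (nat \<Rightarrow> 'a^'n) \<Rightarrow> 'a^'n^'n" where
  "tmat d u u' = matrix (\<lambda>x. \<Sum>i\<le>d. coord d u x i *s u' i)"

lemma tmat_apply: "cbasis d u \<Longrightarrow> tmat d u u' *v x = (\<Sum>i\<le>d. coord d u x i *s u' i)"
  unfolding tmat_def by (rule matrix_works[OF lin_coordmap])

lemma tmat_basis: "cbasis d u \<Longrightarrow> k \<le> d \<Longrightarrow> tmat d u u' *v u k = u' k"
proof -
  assume cb: "cbasis d u" and k: "k \<le> d"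
  have "tmat d u u' *v u k = (\<Sum>i\<le>d. coord d u (u k) i *s u' i)" by (rule tmat_apply[OF cb])
  also have "\<dots> = (\<Sum>i\<le>d. (if i = k then 1 else 0) *s u' i)"
    by (rule sum.cong) (auto simp: cbasis.coord_basis[OF cb _ k])
  also have "\<dots> = u' k" using k by (subst sum_delta_scale) auto
  finally show ?thesis .
qed

lemma mat_eq_on_basis:
  fixes M N :: "'a::field^'n^'n"
  assumes cb: "cbasis d u" and h: "\<And>k. k \<le> d \<Longrightarrow> M *v u k = N *v u k"
  shows "M = N"
  unfolding matrix_eq
proof
  fix x
  have "M *v x = (\<Sum>i\<le>d. coord d u x i *s (M *v u i))"
    by (subst cbasis.coord_expand[OF cb, of x]) (simp add: mv_sum vector_scalar_commute)
  also have "\<dots> = (\<Sum>i\<le>d. coord d u x i *s (N *v u i))" by (rule sum.cong) (auto simp: h)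
  also have "\<dots> = N *v x"
    by (subst (2) cbasis.coord_expand[OF cb, of x]) (simp add: mv_sum vector_scalar_commute)
  finally show "M *v x = N *v x" .
qed

lemma tmat_inv:
  assumes cb: "cbasis d u" and cb': "cbasis d u'"
  shows "tmat d u u' ** tmat d u' u = mat 1"
proof (rule mat_eq_on_basis[OF cb'])
  fix k assume k: "k \<le> d"
  have "(tmat d u u' ** tmat d u' u) *v u' k = tmat d u u' *v (tmat d u' u *v u' k)"
    by (simp add: matrix_vector_mul_assoc)
  also have "\<dots> = u' k" using tmat_basis[OF cb' k] tmat_basis[OF cb k] by simp
  finally show "(tmat d u u' ** tmat d u' u) *v u' k = mat 1 *v u' k" by simp
qed

lemma tmat_invertible:
  assumes cb: "cbasis d u" and cb': "cbasis d u'"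
  shows "invertible (tmat d u u')"
  unfolding invertible_def using tmat_inv[OF cb cb'] tmat_inv[OF cb' cb] by blast

lemma tmat_intertwine:
  fixes M M' :: "'a::field^'n^'n"
  assumes cb: "cbasis d u" and cb': "cbasis d u'"
    and h: "\<And>k j. k \<le> d \<Longrightarrow> j \<le> d \<Longrightarrow> coord d u (M *v u k) j = coord d u' (M' *v u' k) j"
  shows "tmat d u u' ** M = M' ** tmat d u u'"
proof (rule mat_eq_on_basis[OF cb])
  fix k assume k: "k \<le> d"
  have "(tmat d u u' ** M) *v u k = (\<Sum>j\<le>d. coord d u (M *v u k) j *s u' j)"
    by (simp add: matrix_vector_mul_assoc[symmetric] tmat_apply[OF cb])
  also have "\<dots> = (\<Sum>j\<le>d. coord d u' (M' *v u' k) j *s u' j)" by (rule sum.cong) (auto simp: h k)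
  also have "\<dots> = M' *v u' k" by (rule cbasis.coord_expand[OF cb', symmetric])
  also have "\<dots> = (M' ** tmat d u u') *v u k" by (simp add: matrix_vector_mul_assoc[symmetric] tmat_basis[OF cb k])
  finally show "(tmat d u u' ** M) *v u k = (M' ** tmat d u u') *v u k" .
qed



lemma rev_param:
  fixes A C :: "'a::field^'n^'n"
  assumes pCA: "lr_pair d C A" and s: "1 \<le> s" "s \<le> d"
  shows "lr_param d A C s = lr_param d C A (d + 1 - s)"
proof -
  have pAC: "lr_pair d A C" by (rule rev_pair(1)[OF pCA])
  obtain e where e: "e \<in> lr_decomp d A C d" "e \<noteq> 0" using pair_nonzero[OF pAC] by blast
  define w where "w = (\<lambda>k. pw A (d - k) e)"
  note pc = pair_chain[OF pAC e, folded w_def]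
  have rch: "rchain d w C (lr_param d A C)" using pc(3) unfolding w_def .
  have lch: "lchain d w A" using pc(2) unfolding w_def .
  have cb: "cbasis d w" using pc(1) unfolding w_def .
  have "lr_param d C A (d + 1 - s) = lr_param d A C s"
  proof (rule param_eq)
    have "lr_decomp d C A (d + 1 - s) = lr_decomp d A C (s - 1)"
      using rev_pair(2)[OF pCA, of "s - 1"] s by simp
    then show "lr_decomp d C A (d + 1 - s) = vec.span {w (s - 1)}" using pc(4) s unfolding w_def by simp
    show "w (s - 1) \<noteq> 0" using cbasis.nonzero[OF cb] s by simp
    have "C *v w (s - 1) = lr_param d A C s *s w s" using rchain.rai[OF rch, of "s - 1"] s by simp
    then show "A *v (C *v w (s - 1)) = lr_param d A C s *s w (s - 1)"
      using lchain.low[OF lch, of s] s by (simp add: vector_scalar_commute)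
  qed
  then show ?thesis by simp
qed

lemma decomp_comp:
  fixes X Y :: "'a::field^'n^'n"
  assumes lp: "lr_pair d X Y" and e: "e \<in> lr_decomp d X Y d" "e \<noteq> 0" and i: "i \<le> d"
  shows "decomp_proj d (lr_decomp d X Y) i = matrix (\<lambda>x. coord d (\<lambda>k. pw X (d - k) e) x i *s pw X (d - i) e)"
proof -
  define u where "u = (\<lambda>k. pw X (d - k) e)"
  define Vs where "Vs = lr_decomp d X Y"
  note pc = pair_chain[OF lp e, folded u_def]
  note pd = pair_decomp(1)[OF lp, folded Vs_def]
  have cb: "cbasis d u" using pc(1) unfolding u_def .
  have sp: "\<forall>k\<le>d. Vs k = vec.span {u k}" using pc(4) unfolding u_def Vs_def .
  have "decomp_component d Vs i x = coord d u x i *s u i" for x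
  proof -
    define P where "P = (\<lambda>uu. (\<forall>j\<le>d. uu j \<in> Vs j) \<and> (\<forall>j>d. uu j = (0::'a^'n)) \<and> x = (\<Sum>j\<le>d. uu j))"
    define U where "U = (\<lambda>j. if j \<le> d then coord d u x j *s u j else 0)"
    have PU: "P U"
    proof -
      have "(\<Sum>j\<le>d. U j) = (\<Sum>j\<le>d. coord d u x j *s u j)" unfolding U_def by simp
      also have "\<dots> = x" by (rule cbasis.coord_expand[OF cb, symmetric])
      finally show ?thesis unfolding P_def U_def using sp by (auto simp: in_span1)
    qed
    have "(THE uu. P uu) = U"
    proof (rule the_equality)
      show "P U" by (rule PU)
      fix uu assume "P uu"
      then show "uu = U" using ex1_eq[of P uu U] decD(4)[OF pd, of x] PU unfolding P_def by blast
    qed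
    then show ?thesis unfolding decomp_component_def P_def U_def using i by simp
  qed
  then have "decomp_component d Vs i = (\<lambda>x. coord d u x i *s u i)" by (rule ext)
  then show ?thesis unfolding decomp_proj_def Vs_def u_def by simp
qed

definition pss :: "nat \<Rightarrow> (nat \<Rightarrow> 'a::zero) \<Rightarrow> nat \<Rightarrow> 'a" where
  "pss d \<psi> s = (if 1 \<le> s \<and> s \<le> d then \<psi> s else 0)"

lemma cu_formula_ext:
  assumes T: "tdata d A B C u z w \<phi> \<phi>' \<psi> \<gamma>" and k: "k \<le> d" and j: "j \<le> d"
  shows "coord d u (C *v u k) j =
    (if j = Suc k then pss d \<psi> (Suc k) else if j = k then \<gamma> 1 * (pss d \<psi> (Suc k) - pss d \<psi> k)
     else if Suc j = k then \<phi>' (d + 1 - k) / \<phi> k else 0)"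
  using tdata.cu_formula[OF T k j] unfolding tdata.ps_def[OF T] pss_def .

lemma (in lchain) coord_low_basis: "k \<le> d \<Longrightarrow> j \<le> d \<Longrightarrow> coord d v (X *v v k) j = (if 1 \<le> k \<and> Suc j = k then 1 else 0)"
proof -
  assume k: "k \<le> d" and j: "j \<le> d"
  show ?thesis
  proof (cases "k = 0")
    case True then show ?thesis by (simp add: low0 coord_zero)
  next
    case False
    then have "X *v v k = v (k - 1)" using low k by simp
    then show ?thesis using False j k by (auto simp: coord_basis)
  qed
qed

lemma (in rchain) coord_raise_basis: "k \<le> d \<Longrightarrow> j \<le> d \<Longrightarrow> coord d v (Y *v v k) j = (if k < d \<and> j = Suc k then \<phi> (Suc k) else 0)"
proof -
  assume k: "k \<le> d" and j: "j \<le> d"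
  show ?thesis
  proof (cases "k < d")
    case False then have "k = d" using k by simp
    then show ?thesis by (simp add: raid coord_zero)
  next
    case True
    then show ?thesis using j by (auto simp: rai coord_scale coord_basis)
  qed
qed



lemma triple_setup:
  fixes A B C :: "'a::field^'n^'n"
  assumes tr: "lr_triple d A B C" and d1: "1 \<le> d"
  obtains u z w \<gamma> where "tdata d A B C u z w (lr_param d A B) (lr_param d B C) (lr_param d A C) \<gamma>"
    "trans_params d A B C 1 = \<gamma> 1" "trans_params d A C B 1 = - \<gamma> 1"
    "a_seq d A B C 0 = coord d u (C *v u 0) 0" "a_seq d A B C d = coord d u (C *v u d) d"
    "cbasis d u"
proof -
  have pAB: "lr_pair d A B" and pBC: "lr_pair d B C" and pCA: "lr_pair d C A"
    using tr unfolding lr_triple_def by auto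
  have pAC: "lr_pair d A C" by (rule rev_pair(1)[OF pCA])
  obtain e1 where e1: "e1 \<in> lr_decomp d A B d" "e1 \<noteq> 0" using pair_nonzero[OF pAB] by blast
  define u where "u = (\<lambda>k. pw A (d - k) e1)"
  note pu = pair_chain[OF pAB e1, folded u_def]
  have cbu: "cbasis d u" and lcu: "lchain d u A" and rcu: "rchain d u B (lr_param d A B)"
    using pu(1-3) unfolding u_def by auto
  obtain e2 where e2: "e2 \<in> lr_decomp d B C d" "e2 \<noteq> 0" using pair_nonzero[OF pBC] by blast
  define z where "z = (\<lambda>k. pw B (d - k) e2)"
  note pz = pair_chain[OF pBC e2, folded z_def]
  have lcz: "lchain d z B" and rcz: "rchain d z C (lr_param d B C)" using pz(2,3) unfolding z_def by auto
  obtain e3 where e3: "e3 \<in> lr_decomp d A C d" "e3 \<noteq> 0" using pair_nonzero[OF pAC] by blast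
  note p3 = pair_chain[OF pAC e3]
  define c where "c = coord d u e3 d"
  have cnz: "c \<noteq> 0"
  proof
    assume c0: "c = 0"
    define y where "y = pw A d e3"
    have ynz: "y \<noteq> 0" using cbasis.nonzero[OF p3(1), of 0] unfolding y_def by simp
    have "A *v y = 0" using lchain.low0[OF p3(2)] unfolding y_def by simp
    then have py: "pw A 1 y = 0" by simp
    have "coord d u y j = coord d u 0 j" if "j \<le> d" for j
    proof (cases "j = 0")
      case True
      have "coord d u y 0 = coord d u e3 d" unfolding y_def using lchain.coord_pw[OF lcu] by simp
      then show ?thesis using True c0 by (simp add: c_def cbasis.coord_zero[OF cbu])
    next
      case False
      then show ?thesis using lchain.flag[OF lcu py] by (simp add: cbasis.coord_zero[OF cbu])
    qed
    then have "y = 0" by (rule cbasis.coord_eqI[OF cbu])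
    then show False using ynz by simp
  qed
  define e3' where "e3' = inverse c *s e3"
  have e3'm: "e3' \<in> lr_decomp d A C d"
    unfolding e3'_def using e3(1) decD(1)[OF pair_decomp(1)[OF pAC], of d] by (simp add: vec.subspace_scale)
  have e3'nz: "e3' \<noteq> 0" unfolding e3'_def using cnz e3 by simp
  have top: "coord d u e3' d = 1" unfolding e3'_def using cnz by (simp add: cbasis.coord_scale[OF cbu] c_def[symmetric])
  define w where "w = (\<lambda>k. pw A (d - k) e3')"
  note pw' = pair_chain[OF pAC e3'm e3'nz, folded w_def]
  have cbw: "cbasis d w" and lcw: "lchain d w A" and rcw: "rchain d w C (lr_param d A C)"
    using pw'(1-3) unfolding w_def by auto
  define \<gamma> where "\<gamma> = toe d u w"
  note te = trans_eq[OF pAB pAC e1 e3'm e3'nz top[unfolded u_def], folded u_def w_def]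
  have T1: "toeplitz_transition d u w \<gamma>" and T2: "trans_params d A B C = \<gamma>"
    using te unfolding \<gamma>_def u_def w_def by auto
  have TD: "tdata d A B C u z w (lr_param d A B) (lr_param d B C) (lr_param d A C) \<gamma>"
    by (rule tdata.intro[OF lcu rcu lcz rcz lcw rcw T1])
  have w0: "w 0 = u 0"
  proof -
    have "w 0 = (\<Sum>i\<le>0. \<gamma> (0 - i) *s u i)" "\<gamma> 0 = 1" using T1 unfolding toeplitz_transition_def by blast+
    then show ?thesis by simp
  qed
  have top2: "coord d w e1 d = 1"
  proof -
    have "e1 = u d" unfolding u_def by simp
    have "coord d w (pw A d (u d)) 0 = coord d w (u d) d" using lchain.coord_pw[OF lcw] by simp
    moreover have "pw A d (u d) = u 0" using lchain.pw_top[OF lcu, of 0] by simp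
    ultimately have "coord d w (u d) d = coord d w (w 0) 0" using w0 by simp
    also have "\<dots> = 1" using cbasis.coord_basis[OF cbw, of 0 0] by simp
    finally show ?thesis using \<open>e1 = u d\<close> by simp
  qed
  define \<gamma>' where "\<gamma>' = toe d w u"
  note te2 = trans_eq[OF pAC pAB e3'm e3'nz e1 top2[unfolded w_def], folded u_def w_def]
  have T1': "toeplitz_transition d w u \<gamma>'" and T2': "trans_params d A C B = \<gamma>'"
    using te2 unfolding \<gamma>'_def u_def w_def by auto
  have "\<gamma>' 1 = - \<gamma> 1"
  proof -
    have g0: "\<gamma> 0 = 1" "\<gamma>' 0 = 1" using T1 T1' unfolding toeplitz_transition_def by auto
    have "w 1 = (\<Sum>i\<le>1. \<gamma> (1 - i) *s u i)" using T1 d1 unfolding toeplitz_transition_def by blast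
    then have w1: "w 1 = \<gamma> 1 *s u 0 + u 1" using g0 by (simp add: atMost_Suc)
    have "u 1 = (\<Sum>i\<le>1. \<gamma>' (1 - i) *s w i)" using T1' d1 unfolding toeplitz_transition_def by blast
    then have "u 1 = \<gamma>' 1 *s w 0 + w 1" using g0 by (simp add: atMost_Suc)
    then have "u 1 = (\<gamma>' 1 + \<gamma> 1) *s u 0 + u 1" using w1 w0 by (simp add: vec.scale_left_distrib algebra_simps)
    then have "(\<gamma>' 1 + \<gamma> 1) *s u 0 = 0" by (simp add: algebra_simps)
    then have "\<gamma>' 1 + \<gamma> 1 = 0 \<or> u 0 = 0" by (simp only: vec.scale_eq_0_iff)
    moreover have "u 0 \<noteq> 0" using cbasis.nonzero[OF cbu] by simp
    ultimately have "\<gamma>' 1 + \<gamma> 1 = 0" by blast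
    then show ?thesis by (simp add: eq_neg_iff_add_eq_0)
  qed
  have aseq: "a_seq d A B C i = coord d u (C *v u i) i" if i: "i \<le> d" for i
  proof -
    have "decomp_proj d (lr_decomp d A B) i = matrix (\<lambda>x. coord d u x i *s u i)"
      using decomp_comp[OF pAB e1 i] unfolding u_def by simp
    then show ?thesis unfolding a_seq_def using cbasis.trace_rank1[OF cbu] by simp
  qed
  show thesis
    by (rule that[OF TD]) (use T2 T2' \<open>\<gamma>' 1 = - \<gamma> 1\<close> aseq cbu in auto)
qed



lemma core:
  fixes A B C A' B' C' :: "'a::field^'n^'n"
  assumes tr: "lr_triple d A B C" and tr': "lr_triple d A' B' C'" and d1: "1 \<le> d"
    and pAB: "\<And>i. 1 \<le> i \<Longrightarrow> i \<le> d \<Longrightarrow> lr_param d A B i = lr_param d A' B' i"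
    and pBC: "\<And>i. 1 \<le> i \<Longrightarrow> i \<le> d \<Longrightarrow> lr_param d B C i = lr_param d B' C' i"
    and pCA: "\<And>i. 1 \<le> i \<Longrightarrow> i \<le> d \<Longrightarrow> lr_param d C A i = lr_param d C' A' i"
    and sc: "a_seq d A B C 0 = a_seq d A' B' C' 0 \<or> a_seq d A B C d = a_seq d A' B' C' d \<or>
             trans_params d A B C 1 = trans_params d A' B' C' 1 \<or> trans_params d A C B 1 = trans_params d A' C' B' 1"
  shows "lr_triple_iso A B C A' B' C'"
proof -
  obtain u z w \<gamma> where T: "tdata d A B C u z w (lr_param d A B) (lr_param d B C) (lr_param d A C) \<gamma>"
    and t1: "trans_params d A B C 1 = \<gamma> 1" and t2: "trans_params d A C B 1 = - \<gamma> 1"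
    and a0: "a_seq d A B C 0 = coord d u (C *v u 0) 0" and ad: "a_seq d A B C d = coord d u (C *v u d) d"
    and cb: "cbasis d u"
    using triple_setup[OF tr d1] by blast
  obtain u' z' w' \<gamma>' where T': "tdata d A' B' C' u' z' w' (lr_param d A' B') (lr_param d B' C') (lr_param d A' C') \<gamma>'"
    and t1': "trans_params d A' B' C' 1 = \<gamma>' 1" and t2': "trans_params d A' C' B' 1 = - \<gamma>' 1"
    and a0': "a_seq d A' B' C' 0 = coord d u' (C' *v u' 0) 0" and ad': "a_seq d A' B' C' d = coord d u' (C' *v u' d) d"
    and cb': "cbasis d u'"
    using triple_setup[OF tr' d1] by blast
  have lpCA: "lr_pair d C A" and lpCA': "lr_pair d C' A'" using tr tr' unfolding lr_triple_def by auto
  have pAC: "lr_param d A C s = lr_param d A' C' s" if s: "1 \<le> s" "s \<le> d" for s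
  proof -
    have "lr_param d A C s = lr_param d C A (d + 1 - s)" by (rule rev_param[OF lpCA s])
    also have "\<dots> = lr_param d C' A' (d + 1 - s)" using pCA[of "d + 1 - s"] s by simp
    also have "\<dots> = lr_param d A' C' s" by (rule rev_param[OF lpCA' s, symmetric])
    finally show ?thesis .
  qed
  have pss_eq: "pss d (lr_param d A C) = pss d (lr_param d A' C')"
    by (rule ext) (simp add: pss_def pAC)
  have rcw: "rchain d w C (lr_param d A C)" using T unfolding tdata_def by blast
  have nz1: "lr_param d A C 1 \<noteq> 0" using rchain.phinz[OF rcw, of 1] d1 by simp
  have nzd: "lr_param d A C d \<noteq> 0" using rchain.phinz[OF rcw, of d] d1 by simp
  have a0v: "a_seq d A B C 0 = \<gamma> 1 * lr_param d A C 1"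
    using a0 cu_formula_ext[OF T, of 0 0] d1 by (simp add: pss_def)
  have a0v': "a_seq d A' B' C' 0 = \<gamma>' 1 * lr_param d A C 1"
    using a0' cu_formula_ext[OF T', of 0 0] d1 pAC[of 1] by (simp add: pss_def)
  have adv: "a_seq d A B C d = - (\<gamma> 1 * lr_param d A C d)"
    using ad cu_formula_ext[OF T, of d d] d1 by (simp add: pss_def)
  have adv': "a_seq d A' B' C' d = - (\<gamma>' 1 * lr_param d A C d)"
    using ad' cu_formula_ext[OF T', of d d] d1 pAC[of d] by (simp add: pss_def)
  have geq: "\<gamma> 1 = \<gamma>' 1"
    using sc
  proof (elim disjE)
    assume "a_seq d A B C 0 = a_seq d A' B' C' 0"
    then have "\<gamma> 1 * lr_param d A C 1 = \<gamma>' 1 * lr_param d A C 1" using a0v a0v' by simp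
    then show ?thesis using nz1 by simp
  next
    assume "a_seq d A B C d = a_seq d A' B' C' d"
    then have "\<gamma> 1 * lr_param d A C d = \<gamma>' 1 * lr_param d A C d" using adv adv' by simp
    then show ?thesis using nzd by simp
  next
    assume "trans_params d A B C 1 = trans_params d A' B' C' 1"
    then show ?thesis using t1 t1' by simp
  next
    assume "trans_params d A C B 1 = trans_params d A' C' B' 1"
    then show ?thesis using t2 t2' by simp
  qed
  have lcu: "lchain d u A" and rcu: "rchain d u B (lr_param d A B)" using T unfolding tdata_def by blast+
  have lcu': "lchain d u' A'" and rcu': "rchain d u' B' (lr_param d A' B')" using T' unfolding tdata_def by blast+
  define P where "P = tmat d u u'"
  have "invertible P" unfolding P_def by (rule tmat_invertible[OF cb cb'])
  moreover have "P ** A = A' ** P" unfolding P_def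
    by (rule tmat_intertwine[OF cb cb']) (simp add: lchain.coord_low_basis[OF lcu] lchain.coord_low_basis[OF lcu'])
  moreover have "P ** B = B' ** P" unfolding P_def
  proof (rule tmat_intertwine[OF cb cb'])
    fix k j assume k: "k \<le> d" and j: "j \<le> d"
    show "coord d u (B *v u k) j = coord d u' (B' *v u' k) j"
      using rchain.coord_raise_basis[OF rcu k j] rchain.coord_raise_basis[OF rcu' k j] pAB[of "Suc k"] by auto
  qed
  moreover have "P ** C = C' ** P" unfolding P_def
  proof (rule tmat_intertwine[OF cb cb'])
    fix k j assume k: "k \<le> d" and j: "j \<le> d"
    have e1: "coord d u (C *v u k) j =
      (if j = Suc k then pss d (lr_param d A C) (Suc k) else if j = k then \<gamma> 1 * (pss d (lr_param d A C) (Suc k) - pss d (lr_param d A C) k)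
       else if Suc j = k then lr_param d B C (d + 1 - k) / lr_param d A B k else 0)"
      by (rule cu_formula_ext[OF T k j])
    have e2: "coord d u' (C' *v u' k) j =
      (if j = Suc k then pss d (lr_param d A C) (Suc k) else if j = k then \<gamma> 1 * (pss d (lr_param d A C) (Suc k) - pss d (lr_param d A C) k)
       else if Suc j = k then lr_param d B' C' (d + 1 - k) / lr_param d A' B' k else 0)"
      using cu_formula_ext[OF T' k j] unfolding pss_eq geq .
    show "coord d u (C *v u k) j = coord d u' (C' *v u' k) j"
    proof (cases "Suc j = k")
      case True
      then have "lr_param d B C (d + 1 - k) = lr_param d B' C' (d + 1 - k)" "lr_param d A B k = lr_param d A' B' k"
        using pBC[of "d + 1 - k"] pAB[of k] k by auto
      then show ?thesis unfolding e1 e2 by simp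
    next
      case False
      then show ?thesis unfolding e1 e2 by simp
    qed
  qed
  ultimately show ?thesis unfolding lr_triple_iso_def by blast
qed

theorem proposition15p8:
  fixes A B C A' B' C' :: "'a::field^'n^'n" and d :: nat
  assumes "CARD('n) = d + 1"
    and "d \<ge> 1"
    and "lr_triple d A B C"
    and "lr_triple d A' B' C'"
    and "same_param_array d A B C A' B' C'"
    and "a_seq d A B C 0 = a_seq d A' B' C' 0 \<or>
         a'_seq d A B C 0 = a'_seq d A' B' C' 0 \<or>
         a''_seq d A B C 0 = a''_seq d A' B' C' 0 \<or>
         a_seq d A B C d = a_seq d A' B' C' d \<or>
         a'_seq d A B C d = a'_seq d A' B' C' d \<or>
         a''_seq d A B C d = a''_seq d A' B' C' d \<or>
         alpha d A B C 1 = alpha d A' B' C' 1 \<or>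
         alpha' d A B C 1 = alpha' d A' B' C' 1 \<or>
         alpha'' d A B C 1 = alpha'' d A' B' C' 1 \<or>
         beta d A B C 1 = beta d A' B' C' 1 \<or>
         beta' d A B C 1 = beta' d A' B' C' 1 \<or>
         beta'' d A B C 1 = beta'' d A' B' C' 1"
  shows "lr_triple_iso A B C A' B' C'"
proof -
  note d1 = assms(2)
  have tr1: "lr_triple d A B C" "lr_triple d B C A" "lr_triple d C A B"
    using assms(3) unfolding lr_triple_def by auto
  have tr2: "lr_triple d A' B' C'" "lr_triple d B' C' A'" "lr_triple d C' A' B'"
    using assms(4) unfolding lr_triple_def by auto
  have pAB: "\<And>i. 1 \<le> i \<Longrightarrow> i \<le> d \<Longrightarrow> lr_param d A B i = lr_param d A' B' i"
    and pBC: "\<And>i. 1 \<le> i \<Longrightarrow> i \<le> d \<Longrightarrow> lr_param d B C i = lr_param d B' C' i"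
    and pCA: "\<And>i. 1 \<le> i \<Longrightarrow> i \<le> d \<Longrightarrow> lr_param d C A i = lr_param d C' A' i"
    using assms(5) unfolding same_param_array_def by auto
  have R1: "lr_triple_iso A B C A' B' C'" if
    "a_seq d A B C 0 = a_seq d A' B' C' 0 \<or> a_seq d A B C d = a_seq d A' B' C' d \<or>
     trans_params d A B C 1 = trans_params d A' B' C' 1 \<or> trans_params d A C B 1 = trans_params d A' C' B' 1"
    by (rule core[OF tr1(1) tr2(1) d1 pAB pBC pCA that])
  have R2: "lr_triple_iso A B C A' B' C'" if
    "a_seq d B C A 0 = a_seq d B' C' A' 0 \<or> a_seq d B C A d = a_seq d B' C' A' d \<or>
     trans_params d B C A 1 = trans_params d B' C' A' 1 \<or> trans_params d B A C 1 = trans_params d B' A' C' 1"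
  proof -
    have "lr_triple_iso B C A B' C' A'" by (rule core[OF tr1(2) tr2(2) d1 pBC pCA pAB that])
    then show ?thesis unfolding lr_triple_iso_def by blast
  qed
  have R3: "lr_triple_iso A B C A' B' C'" if
    "a_seq d C A B 0 = a_seq d C' A' B' 0 \<or> a_seq d C A B d = a_seq d C' A' B' d \<or>
     trans_params d C A B 1 = trans_params d C' A' B' 1 \<or> trans_params d C B A 1 = trans_params d C' B' A' 1"
  proof -
    have "lr_triple_iso C A B C' A' B'" by (rule core[OF tr1(3) tr2(3) d1 pCA pAB pBC that])
    then show ?thesis unfolding lr_triple_iso_def by blast
  qed
  have e1: "a'_seq d A B C i = a_seq d B C A i" "a''_seq d A B C i = a_seq d C A B i"
    "a'_seq d A' B' C' i = a_seq d B' C' A' i" "a''_seq d A' B' C' i = a_seq d C' A' B' i" for i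
    unfolding a_seq_def a'_seq_def a''_seq_def by simp_all
  show ?thesis
    using assms(6) R1 R2 R3
    unfolding e1 alpha_def alpha'_def alpha''_def beta_def beta'_def beta''_def
    by blast
qed


end
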